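(* Fix $\beta\ge1$ and let $\{X_i\}_{i\ge1}$, $W_n$, $\xi$, $\mathcal H$ and $\alpha$ be as in the context, with $\sup_{i\ge1}\mathbb E[|X_i|^{2+\alpha}]<\infty$. Fix $f\in\mathcal H$ and let $\xi_k:=f(W_k)-\mathbb E[f(W_k)]$, $Z_l:=\sum_{4^{l-1}\le i<4^l}\frac{\xi_i}{i}$ and $T_n:=\sum_{l=1}^nZ_l$. Then there exists a positive constant $M_6$ such that for all $n\ge1$, $$\mathbb E[T_n^2]\le M_6\, n.$$
   Context: Sub-linear expectation space $(\Omega,\mathscr H,\mathbb E)$: $(\Omega,\mathcal F)$ a measurable space, $\mathscr H$ a linear space of real measurable functions closed under $(X_1,\dots,X_n)\mapsto\varphi(X_1,\dots,X_n)$ for $\varphi\in C_{b,Lip}(\mathbb R^n)$ (bounded Lipschitz functions), and $\mathbb E:\mathscr H\to\mathbb R$ monotone, constant preserving, sub-additive and positively homogeneous; it is assumed $\mathbb E[X]=\sup_{P\in\mathcal P}E_P[X]$ for a family $\mathcal P$ of $\sigma$-additive probability measures. $(\widetilde\Omega,\widetilde{\mathscr H},\widetilde{\mathbb E})$ is another sub-linear expectation space. Both satisfy condition (A): for every $X$ and every sequence $f_n\in C_{b,Lip}(\mathbb R)$ with $f_n\downarrow0$, $\mathbb E[f_n(X)]\downarrow0$ (resp. $\widetilde{\mathbb E}[f_n(X)]\downarrow0$). Independence: $Y\in\mathscr H^n$ is independent of $X\in\mathscr H^m$ if $\mathbb E[\varphi(X,Y)]=\mathbb E\big[\mathbb E[\varphi(x,Y)]|_{x=X}\big]$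 for all $\varphi\in C_{b,Lip}(\mathbb R^{m+n})$; $\{X_n\}$ is independent if $X_{n+1}$ is independent of $(X_1,\dots,X_n)$ for every $n$. Standing setting: $\{X_i\}$ is independent in $(\Omega,\mathscr H,\mathbb E)$ with $\mathbb E[X_i]=\mathbb E[-X_i]=0$, $\overline\sigma_i=\sqrt{\mathbb E[X_i^2]}$, $\underline\sigma_i=\sqrt{-\mathbb E[-X_i^2]}$, $\overline\sigma_i/\underline\sigma_i=\beta$ for all $i$, $0<\inf_i\underline\sigma_i^2\le\sup_i\overline\sigma_i^2<\infty$; $S_n=\sum_{i\le n}X_i$, $\sigma_i=(\underline\sigma_i+\overline\sigma_i)/2$, $B_n=\sqrt{\sum_{i\le n}\sigma_i^2}$, $W_n=S_n/B_n$. $\xi$ is $G$-normal under $\widetilde{\mathbb E}$ (for each $f\in C_{b,Lip}(\mathbb R)$, $u(t,x)=\widetilde{\mathbb E}[f(x+\sqrt t\xi)]$ is the unique viscosity solution of $\partial_tu-G(\partial_{xx}u)=0$, $u(0,\cdot)=f$, with $G(a)=\frac12\widetilde{\mathbb E}[a\xi^2]$), with $\sqrt{\widetilde{\mathbb E}[\xi^2]}=\frac{2\beta}{1+\beta}$, $\sqrt{-\widetilde{\mathbb E}[-\xi^2]}=\frac{2}{1+\beta}$. $\mathcal H:=\{f\in C_{b,Lip}(\mathbb R):\widetilde{\mathbb E}[f(\xi)]=-\widetilde{\mathbb E}[-f(\xi)]\}$. $\alpha\in(0,1)$ is the constant from Song's theorem (cited): there exist $\alpha\in(0,1)$ depending on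 $\beta$ and $C_{\alpha,\beta}>0$ such that for every such sequence and every $n$, $\sup_{|f|_{Lip}\le1}|\mathbb E[f(W_n)]-\widetilde{\mathbb E}[f(\xi)]|\le C_{\alpha,\beta}\sup_{1\le i\le n}\{\frac{\mathbb E[|X_i|^{2+\alpha}]}{\sigma_i^{2+\alpha}}(\frac{\sigma_i}{B_n})^\alpha\}$. *)

theory Defs
  imports "HOL-Probability.Probability"
begin

definition bLip1 :: "(real \<Rightarrow> real) \<Rightarrow> bool" where
  "bLip1 f \<longleftrightarrow> (\<exists>B L. \<forall>x y. \<bar>f x\<bar> \<le> B \<and> \<bar>f x - f y\<bar> \<le> L * \<bar>x - y\<bar>)"

definition bLip1_le1 :: "(real \<Rightarrow> real) \<Rightarrow> bool" where
  "bLip1_le1 f \<longleftrightarrow> (\<exists>B. \<forall>x y. \<bar>f x\<bar> \<le> B \<and> \<bar>f x - f y\<bar> \<le> \<bar>x - y\<bar>)"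

text \<open>Bounded Lipschitz functions on R^k, points of R^k represented as real lists of length k
  (the l1 distance is used; all norms on R^k are equivalent, so the class is the same).\<close>
definition bLip_len :: "nat \<Rightarrow> (real list \<Rightarrow> real) \<Rightarrow> bool" where
  "bLip_len k \<phi> \<longleftrightarrow> (\<exists>B L. \<forall>xs ys. length xs = k \<longrightarrow> length ys = k \<longrightarrow>
      \<bar>\<phi> xs\<bar> \<le> B \<and> \<bar>\<phi> xs - \<phi> ys\<bar> \<le> L * (\<Sum>i<k. \<bar>xs ! i - ys ! i\<bar>))"

definition sublinear_space ::
  "'a measure \<Rightarrow> ('a \<Rightarrow> real) set \<Rightarrow> (('a \<Rightarrow> real) \<Rightarrow> real) \<Rightarrow> bool" where
  "sublinear_space M H E \<longleftrightarrow>
     H \<subseteq> borel_measurable M \<and>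
     (\<forall>X\<in>H. \<forall>Y\<in>H. (\<lambda>\<omega>. X \<omega> + Y \<omega>) \<in> H) \<and>
     (\<forall>c. \<forall>X\<in>H. (\<lambda>\<omega>. c * X \<omega>) \<in> H) \<and>
     (\<forall>Xs \<phi>. set Xs \<subseteq> H \<longrightarrow> bLip_len (length Xs) \<phi> \<longrightarrow>
         (\<lambda>\<omega>. \<phi> (map (\<lambda>X. X \<omega>) Xs)) \<in> H) \<and>
     (\<forall>X\<in>H. \<forall>Y\<in>H. (\<forall>\<omega>\<in>space M. X \<omega> \<le> Y \<omega>) \<longrightarrow> E X \<le> E Y) \<and>
     (\<forall>c. E (\<lambda>_. c) = c) \<and>
     (\<forall>X\<in>H. \<forall>Y\<in>H. E (\<lambda>\<omega>. X \<omega> + Y \<omega>) \<le> E X + E Y) \<and>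
     (\<forall>X\<in>H. \<forall>c\<ge>0. E (\<lambda>\<omega>. c * X \<omega>) = c * E X) \<and>
     (\<exists>\<P>. \<P> \<noteq> {} \<and> (\<forall>P\<in>\<P>. prob_space P \<and> sets P = sets M) \<and>
        (\<forall>X\<in>H. (\<forall>P\<in>\<P>. integrable P X) \<and> E X = (SUP P\<in>\<P>. (\<integral>\<omega>. X \<omega> \<partial>P))))"

definition condA :: "('a \<Rightarrow> real) set \<Rightarrow> (('a \<Rightarrow> real) \<Rightarrow> real) \<Rightarrow> bool" where
  "condA H E \<longleftrightarrow> (\<forall>X\<in>H. \<forall>fs :: nat \<Rightarrow> real \<Rightarrow> real.
      (\<forall>n. bLip1 (fs n)) \<longrightarrow> (\<forall>x. decseq (\<lambda>n. fs n x)) \<longrightarrow> (\<forall>x. (\<lambda>n. fs n x) \<longlonglongrightarrow> 0) \<longrightarrow>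
      (\<lambda>n. E (\<lambda>\<omega>. fs n (X \<omega>))) \<longlonglongrightarrow> 0)"

definition indep_of :: "(('a \<Rightarrow> real) \<Rightarrow> real) \<Rightarrow> ('a \<Rightarrow> real) list \<Rightarrow> ('a \<Rightarrow> real) \<Rightarrow> bool" where
  "indep_of E Xs Y \<longleftrightarrow> (\<forall>\<phi>. bLip_len (Suc (length Xs)) \<phi> \<longrightarrow>
      E (\<lambda>\<omega>. \<phi> (map (\<lambda>X. X \<omega>) Xs @ [Y \<omega>])) =
      E (\<lambda>\<omega>. E (\<lambda>\<omega>'. \<phi> (map (\<lambda>X. X \<omega>) Xs @ [Y \<omega>']))))"

text \<open>Independent sequence X_1, X_2, ... (index 0 is unused).\<close>
definition indep_seq :: "(('a \<Rightarrow> real) \<Rightarrow> real) \<Rightarrow> (nat \<Rightarrow> 'a \<Rightarrow> real) \<Rightarrow> bool" where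
  "indep_seq E X \<longleftrightarrow> (\<forall>n\<ge>1. indep_of E (map X [1..<Suc n]) (X (Suc n)))"

definition sig_up :: "(('a \<Rightarrow> real) \<Rightarrow> real) \<Rightarrow> (nat \<Rightarrow> 'a \<Rightarrow> real) \<Rightarrow> nat \<Rightarrow> real" where
  "sig_up E X i = sqrt (E (\<lambda>\<omega>. (X i \<omega>)\<^sup>2))"

definition sig_lo :: "(('a \<Rightarrow> real) \<Rightarrow> real) \<Rightarrow> (nat \<Rightarrow> 'a \<Rightarrow> real) \<Rightarrow> nat \<Rightarrow> real" where
  "sig_lo E X i = sqrt (- E (\<lambda>\<omega>. - (X i \<omega>)\<^sup>2))"

definition sig :: "(('a \<Rightarrow> real) \<Rightarrow> real) \<Rightarrow> (nat \<Rightarrow> 'a \<Rightarrow> real) \<Rightarrow> nat \<Rightarrow> real" where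
  "sig E X i = (sig_lo E X i + sig_up E X i) / 2"

definition Bn :: "(('a \<Rightarrow> real) \<Rightarrow> real) \<Rightarrow> (nat \<Rightarrow> 'a \<Rightarrow> real) \<Rightarrow> nat \<Rightarrow> real" where
  "Bn E X n = sqrt (\<Sum>i=1..n. (sig E X i)\<^sup>2)"

definition Sn :: "(nat \<Rightarrow> 'a \<Rightarrow> real) \<Rightarrow> nat \<Rightarrow> 'a \<Rightarrow> real" where
  "Sn X n = (\<lambda>\<omega>. \<Sum>i=1..n. X i \<omega>)"

definition Wn :: "(('a \<Rightarrow> real) \<Rightarrow> real) \<Rightarrow> (nat \<Rightarrow> 'a \<Rightarrow> real) \<Rightarrow> nat \<Rightarrow> 'a \<Rightarrow> real" where
  "Wn E X n = (\<lambda>\<omega>. Sn X n \<omega> / Bn E X n)"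

text \<open>The standing assumptions on a sequence (with ratio beta), including membership in H of
  the functionals X_i^2 and |X_i|^(2+alpha) whose expectations are used.\<close>
definition standing_seq ::
  "('a \<Rightarrow> real) set \<Rightarrow> (('a \<Rightarrow> real) \<Rightarrow> real) \<Rightarrow> real \<Rightarrow> real \<Rightarrow> (nat \<Rightarrow> 'a \<Rightarrow> real) \<Rightarrow> bool" where
  "standing_seq H E \<beta> \<alpha> X \<longleftrightarrow>
     indep_seq E X \<and>
     (\<forall>i\<ge>1. X i \<in> H \<and> (\<lambda>\<omega>. (X i \<omega>)\<^sup>2) \<in> H \<and> (\<lambda>\<omega>. \<bar>X i \<omega>\<bar> powr (2 + \<alpha>)) \<in> H) \<and>
     (\<forall>i\<ge>1. E (X i) = 0 \<and> E (\<lambda>\<omega>. - X i \<omega>) = 0) \<and>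
     (\<forall>i\<ge>1. sig_up E X i / sig_lo E X i = \<beta>) \<and>
     (\<exists>c>0. \<forall>i\<ge>1. c \<le> (sig_lo E X i)\<^sup>2) \<and>
     (\<exists>K. \<forall>i\<ge>1. (sig_up E X i)\<^sup>2 \<le> K)"

definition Gfun :: "(('b \<Rightarrow> real) \<Rightarrow> real) \<Rightarrow> ('b \<Rightarrow> real) \<Rightarrow> real \<Rightarrow> real" where
  "Gfun Et \<xi> a = 1/2 * Et (\<lambda>\<omega>. a * (\<xi> \<omega>)\<^sup>2)"

definition C12_test :: "(real \<Rightarrow> real \<Rightarrow> real) \<Rightarrow> (real \<Rightarrow> real \<Rightarrow> real) \<Rightarrow> (real \<Rightarrow> real \<Rightarrow> real) \<Rightarrow> bool" where
  "C12_test \<phi> \<phi>t \<phi>xx \<longleftrightarrow> (\<exists>\<phi>x.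
     (\<forall>t>0. \<forall>x. ((\<lambda>s. \<phi> s x) has_real_derivative \<phi>t t x) (at t) \<and>
               ((\<lambda>y. \<phi> t y) has_real_derivative \<phi>x t x) (at x) \<and>
               ((\<lambda>y. \<phi>x t y) has_real_derivative \<phi>xx t x) (at x)) \<and>
     continuous_on ({0<..} \<times> UNIV) (\<lambda>(t,x). \<phi> t x) \<and>
     continuous_on ({0<..} \<times> UNIV) (\<lambda>(t,x). \<phi>t t x) \<and>
     continuous_on ({0<..} \<times> UNIV) (\<lambda>(t,x). \<phi>x t x) \<and>
     continuous_on ({0<..} \<times> UNIV) (\<lambda>(t,x). \<phi>xx t x))"

definition visc_solution :: "(real \<Rightarrow> real) \<Rightarrow> (real \<Rightarrow> real \<Rightarrow> real) \<Rightarrow> bool" where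
  "visc_solution G u \<longleftrightarrow>
     continuous_on ({0..} \<times> UNIV) (\<lambda>(t,x). u t x) \<and>
     (\<forall>t>0. \<forall>x. \<forall>\<phi> \<phi>t \<phi>xx. C12_test \<phi> \<phi>t \<phi>xx \<longrightarrow>
         (\<forall>s>0. \<forall>y. u s y \<le> \<phi> s y) \<longrightarrow> \<phi> t x = u t x \<longrightarrow> \<phi>t t x - G (\<phi>xx t x) \<le> 0) \<and>
     (\<forall>t>0. \<forall>x. \<forall>\<phi> \<phi>t \<phi>xx. C12_test \<phi> \<phi>t \<phi>xx \<longrightarrow>
         (\<forall>s>0. \<forall>y. u s y \<ge> \<phi> s y) \<longrightarrow> \<phi> t x = u t x \<longrightarrow> \<phi>t t x - G (\<phi>xx t x) \<ge> 0)"

definition G_normal :: "(('b \<Rightarrow> real) \<Rightarrow> real) \<Rightarrow> ('b \<Rightarrow> real) \<Rightarrow> bool" where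
  "G_normal Et \<xi> \<longleftrightarrow> (\<forall>f. bLip1 f \<longrightarrow>
     visc_solution (Gfun Et \<xi>) (\<lambda>t x. Et (\<lambda>\<omega>. f (x + sqrt t * \<xi> \<omega>))) \<and>
     (\<forall>x. Et (\<lambda>\<omega>. f (x + sqrt 0 * \<xi> \<omega>)) = f x))"

definition song_bound ::
  "('a \<Rightarrow> real) set \<Rightarrow> (('a \<Rightarrow> real) \<Rightarrow> real) \<Rightarrow> (('b \<Rightarrow> real) \<Rightarrow> real) \<Rightarrow> ('b \<Rightarrow> real) \<Rightarrow> real \<Rightarrow> real \<Rightarrow> bool" where
  "song_bound H E Et \<xi> \<beta> \<alpha> \<longleftrightarrow> (\<exists>C>0. \<forall>Y. standing_seq H E \<beta> \<alpha> Y \<longrightarrow>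
     (\<forall>n\<ge>1. \<forall>g. bLip1_le1 g \<longrightarrow>
        \<bar>E (\<lambda>\<omega>. g (Wn E Y n \<omega>)) - Et (\<lambda>\<omega>. g (\<xi> \<omega>))\<bar> \<le>
        C * (MAX i\<in>{1..n}. E (\<lambda>\<omega>. \<bar>Y i \<omega>\<bar> powr (2 + \<alpha>)) / (sig E Y i) powr (2 + \<alpha>)
                              * (sig E Y i / Bn E Y n) powr \<alpha>)))"

end

theory Submission
  imports Defs
begin


section \<open>Generic facts on sub-linear expectations\<close>

context
  fixes M :: "'a measure" and H :: "('a \<Rightarrow> real) set" and E :: "('a \<Rightarrow> real) \<Rightarrow> real"
  assumes sp: "sublinear_space M H E"
begin

lemma H_add: "X \<in> H \<Longrightarrow> Y \<in> H \<Longrightarrow> (\<lambda>\<omega>. X \<omega> + Y \<omega>) \<in> H"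
  using sp[unfolded sublinear_space_def, THEN conjunct2, THEN conjunct1] by blast

lemma H_scale: "X \<in> H \<Longrightarrow> (\<lambda>\<omega>. c * X \<omega>) \<in> H"
  using sp[unfolded sublinear_space_def, THEN conjunct2, THEN conjunct2, THEN conjunct1] by blast

lemma H_list: "set Xs \<subseteq> H \<Longrightarrow> bLip_len (length Xs) \<phi> \<Longrightarrow> (\<lambda>\<omega>. \<phi> (map (\<lambda>X. X \<omega>) Xs)) \<in> H"
  using sp[unfolded sublinear_space_def, THEN conjunct2, THEN conjunct2, THEN conjunct2, THEN conjunct1] by blast

lemma E_mono: "X \<in> H \<Longrightarrow> Y \<in> H \<Longrightarrow> (\<And>\<omega>. X \<omega> \<le> Y \<omega>) \<Longrightarrow> E X \<le> E Y"
  using sp[unfolded sublinear_space_def, THEN conjunct2, THEN conjunct2, THEN conjunct2, THEN conjunct2, THEN conjunct1] by blast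

lemma E_const: "E (\<lambda>_. c) = c"
  using sp[unfolded sublinear_space_def, THEN conjunct2, THEN conjunct2, THEN conjunct2, THEN conjunct2, THEN conjunct2, THEN conjunct1] by blast

lemma E_add: "X \<in> H \<Longrightarrow> Y \<in> H \<Longrightarrow> E (\<lambda>\<omega>. X \<omega> + Y \<omega>) \<le> E X + E Y"
  using sp[unfolded sublinear_space_def, THEN conjunct2, THEN conjunct2, THEN conjunct2, THEN conjunct2, THEN conjunct2, THEN conjunct2, THEN conjunct1] by blast

lemma E_hom: "X \<in> H \<Longrightarrow> c \<ge> 0 \<Longrightarrow> E (\<lambda>\<omega>. c * X \<omega>) = c * E X"
  using sp[unfolded sublinear_space_def, THEN conjunct2, THEN conjunct2, THEN conjunct2, THEN conjunct2, THEN conjunct2, THEN conjunct2, THEN conjunct2, THEN conjunct1] by blast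

lemma H_const: "(\<lambda>_. c) \<in> H"
proof -
  have "bLip_len (length []) (\<lambda>_. c)" unfolding bLip_len_def
    by (rule exI[of _ "\<bar>c\<bar>"], rule exI[of _ 0]) auto
  from H_list[OF _ this] show ?thesis by simp
qed

lemma H_comp: assumes "bLip1 g" "Y \<in> H" shows "(\<lambda>\<omega>. g (Y \<omega>)) \<in> H"
proof -
  from assms(1) obtain B L where BL: "\<And>x y. \<bar>g x\<bar> \<le> B \<and> \<bar>g x - g y\<bar> \<le> L * \<bar>x - y\<bar>"
    unfolding bLip1_def by blast
  have "bLip_len (length [Y]) (\<lambda>xs. g (xs ! 0))" unfolding bLip_len_def
    by (rule exI[of _ B], rule exI[of _ L]) (simp add: BL)
  from H_list[OF _ this] assms(2) show ?thesis by simp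
qed

lemma H_minus: "X \<in> H \<Longrightarrow> (\<lambda>\<omega>. - X \<omega>) \<in> H"
  using H_scale[of X "-1"] by simp

lemma H_diff: "X \<in> H \<Longrightarrow> Y \<in> H \<Longrightarrow> (\<lambda>\<omega>. X \<omega> - Y \<omega>) \<in> H"
  using H_add[of X "\<lambda>\<omega>. - Y \<omega>"] H_minus[of Y] by simp

lemma H_div: "X \<in> H \<Longrightarrow> (\<lambda>\<omega>. X \<omega> / c) \<in> H"
  using H_scale[of X "1/c"] by simp

lemma H_addc: "X \<in> H \<Longrightarrow> (\<lambda>\<omega>. X \<omega> + c) \<in> H"
  using H_add[OF _ H_const] by simp

lemma H_sum: "finite A \<Longrightarrow> (\<And>a. a \<in> A \<Longrightarrow> F a \<in> H) \<Longrightarrow> (\<lambda>\<omega>. \<Sum>a\<in>A. F a \<omega>) \<in> H"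
proof (induction A rule: finite_induct)
  case empty then show ?case using H_const[of 0] by simp
next
  case (insert x A) then show ?case using H_add[of "F x"] by simp
qed

lemma E_sum_le: "finite A \<Longrightarrow> (\<And>a. a \<in> A \<Longrightarrow> F a \<in> H) \<Longrightarrow> E (\<lambda>\<omega>. \<Sum>a\<in>A. F a \<omega>) \<le> (\<Sum>a\<in>A. E (F a))"
proof (induction A rule: finite_induct)
  case empty then show ?case using E_const[of 0] by simp
next
  case (insert x A)
  have "E (\<lambda>\<omega>. \<Sum>a\<in>insert x A. F a \<omega>) = E (\<lambda>\<omega>. F x \<omega> + (\<Sum>a\<in>A. F a \<omega>))"
    using insert by simp
  also have "\<dots> \<le> E (F x) + E (\<lambda>\<omega>. \<Sum>a\<in>A. F a \<omega>)"
    using E_add[of "F x" "\<lambda>\<omega>. \<Sum>a\<in>A. F a \<omega>"] H_sum[of A F] insert by simp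
  also have "\<dots> \<le> (\<Sum>a\<in>insert x A. E (F a))" using insert by simp
  finally show ?case .
qed

lemma E_shift: assumes "X \<in> H" shows "E (\<lambda>\<omega>. X \<omega> + c) = E X + c"
proof -
  have 1: "E (\<lambda>\<omega>. X \<omega> + c) \<le> E X + c" using E_add[OF assms H_const[of c]] E_const by simp
  have "E X = E (\<lambda>\<omega>. (X \<omega> + c) + (-c))" by simp
  also have "\<dots> \<le> E (\<lambda>\<omega>. X \<omega> + c) + (-c)"
    using E_add[OF H_addc[OF assms, of c] H_const[of "-c"]] E_const by simp
  finally show ?thesis using 1 by simp
qed

lemma E_mono_c: "X \<in> H \<Longrightarrow> (\<And>\<omega>. X \<omega> \<le> c) \<Longrightarrow> E X \<le> c"
  using E_mono[OF _ H_const, of X c] E_const by simp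

lemma E_mono_c2: "X \<in> H \<Longrightarrow> (\<And>\<omega>. c \<le> X \<omega>) \<Longrightarrow> c \<le> E X"
  using E_mono[OF H_const _, of X c] E_const by simp

lemma E_bound: "X \<in> H \<Longrightarrow> (\<And>\<omega>. \<bar>X \<omega>\<bar> \<le> B) \<Longrightarrow> \<bar>E X\<bar> \<le> B"
proof -
  assume a: "X \<in> H" "\<And>\<omega>. \<bar>X \<omega>\<bar> \<le> B"
  have "E X \<le> B" using E_mono_c[of X B] a abs_le_iff by blast
  moreover have "-B \<le> E X" using E_mono_c2[of X "-B"] a abs_le_iff by (metis minus_le_iff)
  ultimately show ?thesis by simp
qed

lemma E_le_shift: "X \<in> H \<Longrightarrow> Y \<in> H \<Longrightarrow> (\<And>\<omega>. X \<omega> \<le> Y \<omega> + d) \<Longrightarrow> E X \<le> E Y + d"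
  using E_mono[OF _ H_addc, of X Y d] E_shift[of Y d] by simp

lemma E_lip: "X \<in> H \<Longrightarrow> Y \<in> H \<Longrightarrow> (\<And>\<omega>. \<bar>X \<omega> - Y \<omega>\<bar> \<le> d) \<Longrightarrow> \<bar>E X - E Y\<bar> \<le> d"
  using E_le_shift[of X Y d] E_le_shift[of Y X d] by (smt (verit, best))

lemma E_param_bLip:
  assumes "\<And>t. F t \<in> H" "\<And>t \<omega>. \<bar>F t \<omega>\<bar> \<le> B" "\<And>t s \<omega>. \<bar>F t \<omega> - F s \<omega>\<bar> \<le> L * \<bar>t - s\<bar>"
  shows "bLip1 (\<lambda>t. E (F t))"
  unfolding bLip1_def
  by (rule exI[of _ B], rule exI[of _ L]) (use E_bound E_lip assms in blast)

end


lemma bLip_lenI: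
  assumes "\<And>xs. length xs = N \<Longrightarrow> \<bar>\<phi> xs\<bar> \<le> B"
    "\<And>xs ys. length xs = N \<Longrightarrow> length ys = N \<Longrightarrow> \<bar>\<phi> xs - \<phi> ys\<bar> \<le> L * (\<Sum>i<N. \<bar>xs ! i - ys ! i\<bar>)"
  shows "bLip_len N \<phi>"
  unfolding bLip_len_def using assms by blast

lemma bLip_lenE:
  assumes "bLip_len N \<phi>"
  obtains B L where "B \<ge> 0" "L \<ge> 0" "\<And>xs. length xs = N \<Longrightarrow> \<bar>\<phi> xs\<bar> \<le> B"
    "\<And>xs ys. length xs = N \<Longrightarrow> length ys = N \<Longrightarrow> \<bar>\<phi> xs - \<phi> ys\<bar> \<le> L * (\<Sum>i<N. \<bar>xs ! i - ys ! i\<bar>)"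
proof -
  from assms obtain B L where BL: "\<And>xs ys. length xs = N \<Longrightarrow> length ys = N \<Longrightarrow>
      \<bar>\<phi> xs\<bar> \<le> B \<and> \<bar>\<phi> xs - \<phi> ys\<bar> \<le> L * (\<Sum>i<N. \<bar>xs ! i - ys ! i\<bar>)"
    unfolding bLip_len_def by blast
  show ?thesis
  proof (rule that[of "max B 0" "max L 0"])
    fix xs :: "real list" assume "length xs = N" then show "\<bar>\<phi> xs\<bar> \<le> max B 0" using BL[of xs xs] by auto
  next
    fix xs ys :: "real list" assume l: "length xs = N" "length ys = N"
    have "L * (\<Sum>i<N. \<bar>xs ! i - ys ! i\<bar>) \<le> max L 0 * (\<Sum>i<N. \<bar>xs ! i - ys ! i\<bar>)"
      by (rule mult_right_mono) (auto intro: sum_nonneg)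
    then show "\<bar>\<phi> xs - \<phi> ys\<bar> \<le> max L 0 * (\<Sum>i<N. \<bar>xs ! i - ys ! i\<bar>)" using BL[OF l] by linarith
  qed auto
qed

lemma bLip1E:
  assumes "bLip1 g"
  obtains B L where "B \<ge> 0" "L \<ge> 0" "\<And>x. \<bar>g x\<bar> \<le> B" "\<And>x y. \<bar>g x - g y\<bar> \<le> L * \<bar>x - y\<bar>"
proof -
  from assms obtain B L where BL: "\<And>x y. \<bar>g x\<bar> \<le> B \<and> \<bar>g x - g y\<bar> \<le> L * \<bar>x - y\<bar>"
    unfolding bLip1_def by blast
  show ?thesis
  proof (rule that[of "max B 0" "max L 0"])
    fix x y
    have "L * \<bar>x - y\<bar> \<le> max L 0 * \<bar>x - y\<bar>" by (rule mult_right_mono) auto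
    then show "\<bar>g x - g y\<bar> \<le> max L 0 * \<bar>x - y\<bar>" using BL[of x y] by linarith
  next
    fix x show "\<bar>g x\<bar> \<le> max B 0" using BL[of x x] by auto
  qed auto
qed

lemma bLip1I: "(\<And>x. \<bar>g x\<bar> \<le> B) \<Longrightarrow> (\<And>x y. \<bar>g x - g y\<bar> \<le> L * \<bar>x - y\<bar>) \<Longrightarrow> bLip1 g"
  unfolding bLip1_def by blast

lemma bLip_len_add:
  assumes "bLip_len N \<phi>" "bLip_len N \<psi>" shows "bLip_len N (\<lambda>xs. \<phi> xs + \<psi> xs)"
proof -
  obtain B1 L1 where 1: "\<And>xs. length xs = N \<Longrightarrow> \<bar>\<phi> xs\<bar> \<le> B1"
    "\<And>xs ys. length xs = N \<Longrightarrow> length ys = N \<Longrightarrow> \<bar>\<phi> xs - \<phi> ys\<bar> \<le> L1 * (\<Sum>i<N. \<bar>xs ! i - ys ! i\<bar>)"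
    using bLip_lenE[OF assms(1)] by metis
  obtain B2 L2 where 2: "\<And>xs. length xs = N \<Longrightarrow> \<bar>\<psi> xs\<bar> \<le> B2"
    "\<And>xs ys. length xs = N \<Longrightarrow> length ys = N \<Longrightarrow> \<bar>\<psi> xs - \<psi> ys\<bar> \<le> L2 * (\<Sum>i<N. \<bar>xs ! i - ys ! i\<bar>)"
    using bLip_lenE[OF assms(2)] by metis
  show ?thesis
  proof (rule bLip_lenI[of N _ "B1 + B2" "L1 + L2"])
    fix xs :: "real list" assume "length xs = N" then show "\<bar>\<phi> xs + \<psi> xs\<bar> \<le> B1 + B2" using 1 2 by (smt (verit))
  next
    fix xs ys :: "real list" assume l: "length xs = N" "length ys = N"
    show "\<bar>\<phi> xs + \<psi> xs - (\<phi> ys + \<psi> ys)\<bar> \<le> (L1 + L2) * (\<Sum>i<N. \<bar>xs ! i - ys ! i\<bar>)"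
      using 1(2)[OF l] 2(2)[OF l] by (simp add: distrib_right)
  qed
qed

lemma bLip_len_mult:
  assumes "bLip_len N \<phi>" "bLip_len N \<psi>" shows "bLip_len N (\<lambda>xs. \<phi> xs * \<psi> xs)"
proof -
  obtain B1 L1 where 1: "B1 \<ge> 0" "L1 \<ge> 0" "\<And>xs. length xs = N \<Longrightarrow> \<bar>\<phi> xs\<bar> \<le> B1"
    "\<And>xs ys. length xs = N \<Longrightarrow> length ys = N \<Longrightarrow> \<bar>\<phi> xs - \<phi> ys\<bar> \<le> L1 * (\<Sum>i<N. \<bar>xs ! i - ys ! i\<bar>)"
    using bLip_lenE[OF assms(1)] by metis
  obtain B2 L2 where 2: "B2 \<ge> 0" "L2 \<ge> 0" "\<And>xs. length xs = N \<Longrightarrow> \<bar>\<psi> xs\<bar> \<le> B2"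
    "\<And>xs ys. length xs = N \<Longrightarrow> length ys = N \<Longrightarrow> \<bar>\<psi> xs - \<psi> ys\<bar> \<le> L2 * (\<Sum>i<N. \<bar>xs ! i - ys ! i\<bar>)"
    using bLip_lenE[OF assms(2)] by metis
  show ?thesis
  proof (rule bLip_lenI[of N _ "B1 * B2" "B1 * L2 + B2 * L1"])
    fix xs :: "real list" assume "length xs = N" then show "\<bar>\<phi> xs * \<psi> xs\<bar> \<le> B1 * B2"
      using 1 2 by (simp add: abs_mult mult_mono)
  next
    fix xs ys :: "real list" assume l: "length xs = N" "length ys = N"
    define d where "d = (\<Sum>i<N. \<bar>xs ! i - ys ! i\<bar>)"
    have "\<phi> xs * \<psi> xs - \<phi> ys * \<psi> ys = \<phi> xs * (\<psi> xs - \<psi> ys) + \<psi> ys * (\<phi> xs - \<phi> ys)"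
      by (simp add: algebra_simps)
    then have "\<bar>\<phi> xs * \<psi> xs - \<phi> ys * \<psi> ys\<bar> \<le> \<bar>\<phi> xs\<bar> * \<bar>\<psi> xs - \<psi> ys\<bar> + \<bar>\<psi> ys\<bar> * \<bar>\<phi> xs - \<phi> ys\<bar>"
      by (metis abs_mult abs_triangle_ineq)
    also have "\<dots> \<le> B1 * (L2 * d) + B2 * (L1 * d)"
      using 1 2 l unfolding d_def
      by (intro add_mono mult_mono) (auto intro: sum_nonneg)
    finally show "\<bar>\<phi> xs * \<psi> xs - \<phi> ys * \<psi> ys\<bar> \<le> (B1 * L2 + B2 * L1) * (\<Sum>i<N. \<bar>xs ! i - ys ! i\<bar>)"
      unfolding d_def by (simp add: algebra_simps)
  qed
qed

lemma bLip_len_const: "bLip_len N (\<lambda>_. c)"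
  by (rule bLip_lenI[of N _ "\<bar>c\<bar>" 0]) auto

lemma bLip_len_sum:
  "finite A \<Longrightarrow> (\<And>a. a \<in> A \<Longrightarrow> bLip_len N (F a)) \<Longrightarrow> bLip_len N (\<lambda>xs. \<Sum>a\<in>A. F a xs)"
proof (induction A rule: finite_induct)
  case empty then show ?case using bLip_len_const[of N 0] by simp
next
  case (insert x A) then show ?case using bLip_len_add[of N "F x"] by simp
qed

lemma bLip_len_psum:
  assumes g: "bLip1 g" and J: "J \<subseteq> {..<N}"
  shows "bLip_len N (\<lambda>xs. g (\<Sum>j\<in>J. xs ! j))"
proof -
  obtain B L where BL: "L \<ge> 0" "\<And>x. \<bar>g x\<bar> \<le> B" "\<And>x y. \<bar>g x - g y\<bar> \<le> L * \<bar>x - y\<bar>"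
    using bLip1E[OF g] by metis
  have fin: "finite J" using J finite_subset by blast
  show ?thesis
  proof (rule bLip_lenI[of N _ B L])
    fix xs ys :: "real list"
    have "\<bar>(\<Sum>j\<in>J. xs ! j) - (\<Sum>j\<in>J. ys ! j)\<bar> = \<bar>\<Sum>j\<in>J. xs ! j - ys ! j\<bar>"
      by (simp add: sum_subtractf)
    also have "\<dots> \<le> (\<Sum>j\<in>J. \<bar>xs ! j - ys ! j\<bar>)" by (rule sum_abs)
    also have "\<dots> \<le> (\<Sum>j<N. \<bar>xs ! j - ys ! j\<bar>)" by (rule sum_mono2) (use J in auto)
    finally have "\<bar>(\<Sum>j\<in>J. xs ! j) - (\<Sum>j\<in>J. ys ! j)\<bar> \<le> (\<Sum>j<N. \<bar>xs ! j - ys ! j\<bar>)" .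
    then show "\<bar>g (\<Sum>j\<in>J. xs ! j) - g (\<Sum>j\<in>J. ys ! j)\<bar> \<le> L * (\<Sum>i<N. \<bar>xs ! i - ys ! i\<bar>)"
      using BL(3)[of "\<Sum>j\<in>J. xs ! j" "\<Sum>j\<in>J. ys ! j"] mult_left_mono[OF _ BL(1)] by (meson order_trans)
  qed (use BL in auto)
qed

lemma dist_snoc:
  assumes "length zs = N" "length ws = N"
  shows "(\<Sum>i<Suc N. \<bar>(zs @ [y]) ! i - (ws @ [y']) ! i\<bar>) = (\<Sum>i<N. \<bar>zs ! i - ws ! i\<bar>) + \<bar>y - y'\<bar>"
  using assms by (simp add: nth_append)

lemma bLip_snoc:
  assumes "bLip_len (Suc N) \<Phi>" "length zs = N"
  shows "bLip1 (\<lambda>y. \<Phi> (zs @ [y]))"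
proof -
  obtain B L where BL: "\<And>xs. length xs = Suc N \<Longrightarrow> \<bar>\<Phi> xs\<bar> \<le> B"
    "\<And>xs ys. length xs = Suc N \<Longrightarrow> length ys = Suc N \<Longrightarrow> \<bar>\<Phi> xs - \<Phi> ys\<bar> \<le> L * (\<Sum>i<Suc N. \<bar>xs ! i - ys ! i\<bar>)"
    using bLip_lenE[OF assms(1)] by metis
  show ?thesis
  proof (rule bLip1I[of _ B L])
    fix x show "\<bar>\<Phi> (zs @ [x])\<bar> \<le> B" using BL(1) assms(2) by simp
  next
    fix x y
    have "\<bar>\<Phi> (zs @ [x]) - \<Phi> (zs @ [y])\<bar> \<le> L * (\<Sum>i<Suc N. \<bar>(zs @ [x]) ! i - (zs @ [y]) ! i\<bar>)"
      using BL(2) assms(2) by simp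
    also have "(\<Sum>i<Suc N. \<bar>(zs @ [x]) ! i - (zs @ [y]) ! i\<bar>) = \<bar>x - y\<bar>"
      using dist_snoc[OF assms(2) assms(2)] by simp
    finally show "\<bar>\<Phi> (zs @ [x]) - \<Phi> (zs @ [y])\<bar> \<le> L * \<bar>x - y\<bar>" .
  qed
qed

lemma bLip_drop:
  assumes "bLip_len N \<Phi>" "length c = k" "k \<le> N"
  shows "bLip_len N (\<lambda>zs. \<Phi> (c @ drop k zs))"
proof -
  obtain B L where BL: "L \<ge> 0" "\<And>xs. length xs = N \<Longrightarrow> \<bar>\<Phi> xs\<bar> \<le> B"
    "\<And>xs ys. length xs = N \<Longrightarrow> length ys = N \<Longrightarrow> \<bar>\<Phi> xs - \<Phi> ys\<bar> \<le> L * (\<Sum>i<N. \<bar>xs ! i - ys ! i\<bar>)"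
    using bLip_lenE[OF assms(1)] by metis
  show ?thesis
  proof (rule bLip_lenI[of N _ B L])
    fix xs :: "real list" assume "length xs = N" then show "\<bar>\<Phi> (c @ drop k xs)\<bar> \<le> B" using BL assms by simp
  next
    fix xs ys :: "real list" assume l: "length xs = N" "length ys = N"
    have "(\<Sum>i<N. \<bar>(c @ drop k xs) ! i - (c @ drop k ys) ! i\<bar>) \<le> (\<Sum>i<N. \<bar>xs ! i - ys ! i\<bar>)"
    proof (rule sum_mono)
      fix i assume "i \<in> {..<N}"
      show "\<bar>(c @ drop k xs) ! i - (c @ drop k ys) ! i\<bar> \<le> \<bar>xs ! i - ys ! i\<bar>"
        using l assms(2,3) by (cases "i < k") (auto simp: nth_append)
    qed
    then show "\<bar>\<Phi> (c @ drop k xs) - \<Phi> (c @ drop k ys)\<bar> \<le> L * (\<Sum>i<N. \<bar>xs ! i - ys ! i\<bar>)"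
      using BL(3)[of "c @ drop k xs" "c @ drop k ys"] l assms mult_left_mono[OF _ BL(1)]
      by (smt (verit) length_append length_drop le_add_diff_inverse)
  qed
qed

definition vec :: "(nat \<Rightarrow> 'a \<Rightarrow> real) \<Rightarrow> nat \<Rightarrow> 'a \<Rightarrow> real list" where
  "vec X N \<omega> = map (\<lambda>j. X j \<omega>) [1..<Suc N]"

lemma length_vec[simp]: "length (vec X N \<omega>) = N"
  by (simp add: vec_def del: upt_Suc)

lemma nth_vec: "j < N \<Longrightarrow> vec X N \<omega> ! j = X (Suc j) \<omega>"
  by (simp add: vec_def del: upt_Suc)

lemma vec_Suc: "vec X (Suc N) \<omega> = vec X N \<omega> @ [X (Suc N) \<omega>]"
  by (simp add: vec_def)

lemma vec_0[simp]: "vec X 0 \<omega> = []"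
  by (simp add: vec_def del: upt_Suc)

context
  fixes M :: "'a measure" and H :: "('a \<Rightarrow> real) set" and E :: "('a \<Rightarrow> real) \<Rightarrow> real"
    and X :: "nat \<Rightarrow> 'a \<Rightarrow> real"
  assumes sp: "sublinear_space M H E" and XH: "\<And>j. 1 \<le> j \<Longrightarrow> X j \<in> H"
    and ind: "indep_seq E X"
begin

lemma H_vec: assumes "bLip_len N \<Phi>" shows "(\<lambda>\<omega>. \<Phi> (vec X N \<omega>)) \<in> H"
proof -
  have "set (map X [1..<Suc N]) \<subseteq> H" using XH by auto
  from H_list[OF sp this] assms show ?thesis by (simp add: vec_def comp_def del: upt_Suc)
qed

lemma indep_step:
  assumes "1 \<le> N" "bLip_len (Suc N) \<phi>"
  shows "E (\<lambda>\<omega>. \<phi> (vec X N \<omega> @ [X (Suc N) \<omega>])) = E (\<lambda>\<omega>. E (\<lambda>\<omega>'. \<phi> (vec X N \<omega> @ [X (Suc N) \<omega>'])))"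
proof -
  have "indep_of E (map X [1..<Suc N]) (X (Suc N))" using ind assms(1) unfolding indep_seq_def by blast
  then show ?thesis using assms(2) unfolding indep_of_def by (simp add: vec_def comp_def del: upt_Suc)
qed

lemma block_le:
  assumes k: "1 \<le> k"
  shows "bLip_len (k + d) \<Phi> \<Longrightarrow> (\<And>c. length c = k \<Longrightarrow> E (\<lambda>\<omega>. \<Phi> (c @ drop k (vec X (k + d) \<omega>))) \<le> D)
     \<Longrightarrow> E (\<lambda>\<omega>. \<Phi> (vec X (k + d) \<omega>)) \<le> D"
proof (induction d arbitrary: \<Phi>)
  case 0
  have "\<And>c. length c = k \<Longrightarrow> \<Phi> c \<le> D"
  proof -
    fix c :: "real list" assume "length c = k"
    then have "E (\<lambda>\<omega>. \<Phi> (c @ drop k (vec X k \<omega>))) \<le> D" using 0 by simp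
    then show "\<Phi> c \<le> D" by (simp add: E_const[OF sp])
  qed
  then show ?case using E_mono_c[OF sp H_vec[OF 0(1)]] by simp
next
  case (Suc d)
  define N where "N = k + d"
  have N1: "1 \<le> N" "k \<le> N" using k by (auto simp: N_def)
  have PhiL: "bLip_len (Suc N) \<Phi>" using Suc(2) by (simp add: N_def)
  obtain B L where BL: "L \<ge> 0" "\<And>xs. length xs = Suc N \<Longrightarrow> \<bar>\<Phi> xs\<bar> \<le> B"
    "\<And>xs ys. length xs = Suc N \<Longrightarrow> length ys = Suc N \<Longrightarrow> \<bar>\<Phi> xs - \<Phi> ys\<bar> \<le> L * (\<Sum>i<Suc N. \<bar>xs ! i - ys ! i\<bar>)"
    using bLip_lenE[OF PhiL] by metis
  define \<Phi>1 where "\<Phi>1 zs = E (\<lambda>\<omega>'. \<Phi> (zs @ [X (Suc N) \<omega>']))" for zs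
  have inH: "(\<lambda>\<omega>'. \<Phi> (zs @ [X (Suc N) \<omega>'])) \<in> H" if "length zs = N" for zs
    using H_comp[OF sp bLip_snoc[OF PhiL that] XH[of "Suc N"]] by simp
  have L1: "bLip_len N \<Phi>1"
  proof (rule bLip_lenI[of N _ B L])
    fix xs :: "real list" assume "length xs = N"
    then show "\<bar>\<Phi>1 xs\<bar> \<le> B" unfolding \<Phi>1_def using E_bound[OF sp inH] BL(2) by simp
  next
    fix xs ys :: "real list" assume l: "length xs = N" "length ys = N"
    show "\<bar>\<Phi>1 xs - \<Phi>1 ys\<bar> \<le> L * (\<Sum>i<N. \<bar>xs ! i - ys ! i\<bar>)"
      unfolding \<Phi>1_def
    proof (rule E_lip[OF sp inH[OF l(1)] inH[OF l(2)]])
      fix \<omega>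
      have "\<bar>\<Phi> (xs @ [X (Suc N) \<omega>]) - \<Phi> (ys @ [X (Suc N) \<omega>])\<bar> \<le>
          L * (\<Sum>i<Suc N. \<bar>(xs @ [X (Suc N) \<omega>]) ! i - (ys @ [X (Suc N) \<omega>]) ! i\<bar>)"
        using BL(3) l by simp
      also have "(\<Sum>i<Suc N. \<bar>(xs @ [X (Suc N) \<omega>]) ! i - (ys @ [X (Suc N) \<omega>]) ! i\<bar>) = (\<Sum>i<N. \<bar>xs ! i - ys ! i\<bar>)"
        using dist_snoc[OF l] by simp
      finally show "\<bar>\<Phi> (xs @ [X (Suc N) \<omega>]) - \<Phi> (ys @ [X (Suc N) \<omega>])\<bar> \<le> L * (\<Sum>i<N. \<bar>xs ! i - ys ! i\<bar>)" .
    qed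
  qed
  have hyp: "E (\<lambda>\<omega>. \<Phi>1 (c @ drop k (vec X N \<omega>))) \<le> D" if c: "length c = k" for c
  proof -
    have Lc: "bLip_len (Suc N) (\<lambda>zs. \<Phi> (c @ drop k zs))"
      using bLip_drop[OF PhiL c] N1 by simp
    have "E (\<lambda>\<omega>. \<Phi>1 (c @ drop k (vec X N \<omega>))) =
          E (\<lambda>\<omega>. E (\<lambda>\<omega>'. \<Phi> (c @ drop k (vec X N \<omega> @ [X (Suc N) \<omega>']))))"
      unfolding \<Phi>1_def using N1 by simp
    also have "\<dots> = E (\<lambda>\<omega>. \<Phi> (c @ drop k (vec X N \<omega> @ [X (Suc N) \<omega>])))"
      using indep_step[OF N1(1) Lc] by simp
    also have "\<dots> = E (\<lambda>\<omega>. \<Phi> (c @ drop k (vec X (k + Suc d) \<omega>)))"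
      by (simp add: N_def vec_Suc)
    also have "\<dots> \<le> D" using Suc(3)[OF c] .
    finally show ?thesis .
  qed
  have "E (\<lambda>\<omega>. \<Phi> (vec X (k + Suc d) \<omega>)) = E (\<lambda>\<omega>. \<Phi> (vec X N \<omega> @ [X (Suc N) \<omega>]))"
    by (simp add: N_def vec_Suc)
  also have "\<dots> = E (\<lambda>\<omega>. \<Phi>1 (vec X N \<omega>))"
    unfolding \<Phi>1_def using indep_step[OF N1(1) PhiL] by simp
  also have "\<dots> \<le> D" using Suc.IH[of \<Phi>1] L1 hyp unfolding N_def by blast
  finally show ?case .
qed

end


locale setting =
  fixes M :: "'a measure" and H :: "('a \<Rightarrow> real) set" and E :: "('a \<Rightarrow> real) \<Rightarrow> real"
    and X :: "nat \<Rightarrow> 'a \<Rightarrow> real" and f :: "real \<Rightarrow> real"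
    and Bf Lf K2 c0 Ce q :: real
  assumes sp: "sublinear_space M H E"
    and ind: "indep_seq E X"
    and XH: "\<And>i. 1 \<le> i \<Longrightarrow> X i \<in> H"
    and X2H: "\<And>i. 1 \<le> i \<Longrightarrow> (\<lambda>\<omega>. (X i \<omega>)\<^sup>2) \<in> H"
    and mean1: "\<And>i. 1 \<le> i \<Longrightarrow> E (X i) = 0"
    and mean2: "\<And>i. 1 \<le> i \<Longrightarrow> E (\<lambda>\<omega>. - X i \<omega>) = 0"
    and K2: "K2 > 0" "\<And>i. 1 \<le> i \<Longrightarrow> E (\<lambda>\<omega>. (X i \<omega>)\<^sup>2) \<le> K2"
    and c0: "c0 > 0" "\<And>i. 1 \<le> i \<Longrightarrow> sqrt (c0 * real i) \<le> Bn E X i"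
    and fB: "Bf \<ge> 0" "\<And>x. \<bar>f x\<bar> \<le> Bf"
    and fL: "Lf > 0" "\<And>x y. \<bar>f x - f y\<bar> \<le> Lf * \<bar>x - y\<bar>"
    and Ce: "Ce \<ge> 0" and q: "q > 1"
    and songb: "\<And>m i. 1 \<le> m \<Longrightarrow> i \<in> {4^(m-1)..<4^m} \<Longrightarrow>
        E (\<lambda>\<omega>. f (Wn E X i \<omega>)) + E (\<lambda>\<omega>. - f (Wn E X i \<omega>)) \<le> Ce * (1/q)^(m-1)"
begin

definition a :: "nat \<Rightarrow> real" where "a i = E (\<lambda>\<omega>. f (Wn E X i \<omega>))"
definition I :: "nat \<Rightarrow> nat set" where "I l = {4^(l-1)..<4^l}"
definition Z :: "nat \<Rightarrow> 'a \<Rightarrow> real" where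
  "Z l \<omega> = (\<Sum>i\<in>I l. (f (Wn E X i \<omega>) - a i) / real i)"
definition Zp :: "nat \<Rightarrow> nat \<Rightarrow> 'a \<Rightarrow> real" where
  "Zp k m \<omega> = (\<Sum>i\<in>I m. (f ((Sn X i \<omega> - Sn X k \<omega>) / Bn E X i) - a i) / real i)"
definition mf :: "nat \<Rightarrow> nat \<Rightarrow> 'a \<Rightarrow> real" where
  "mf k i \<omega> = min (2 * Bf) (Lf / Bn E X i * \<bar>Sn X k \<omega>\<bar>)"
definition T :: "nat \<Rightarrow> 'a \<Rightarrow> real" where "T n \<omega> = (\<Sum>l\<in>{1..n}. Z l \<omega>)"
definition R :: real where "R = 6 * Bf"

lemma fin_I[simp]: "finite (I l)" by (simp add: I_def)

lemma I_ge1: "1 \<le> l \<Longrightarrow> i \<in> I l \<Longrightarrow> 1 \<le> i"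
  unfolding I_def by (auto intro: order_trans[rotated])

lemma I_lower: "i \<in> I l \<Longrightarrow> 4^(l-1) \<le> i" unfolding I_def by auto

lemma Bn_pos: "1 \<le> i \<Longrightarrow> Bn E X i > 0"
proof -
  assume i: "1 \<le> i"
  have "0 < sqrt (c0 * real i)" using c0(1) i by simp
  then show ?thesis using c0(2)[OF i] by linarith
qed

lemma f_bLip: "bLip1 f"
  using fB fL unfolding bLip1_def by blast

lemma Sn_H: "Sn X k \<in> H"
  unfolding Sn_def by (rule H_sum[OF sp]) (auto intro: XH)

lemma W_H: "Wn E X i \<in> H"
  unfolding Wn_def using H_div[OF sp Sn_H] by simp

lemma fW_H: "(\<lambda>\<omega>. f (Wn E X i \<omega>)) \<in> H"
  by (rule H_comp[OF sp f_bLip W_H])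

lemma a_bound: "\<bar>a i\<bar> \<le> Bf"
  unfolding a_def by (rule E_bound[OF sp fW_H]) (rule fB(2))

lemma card_I: "1 \<le> l \<Longrightarrow> card (I l) = 3 * 4^(l-1)"
proof -
  assume "1 \<le> l"
  then have "(4::nat)^l = 4 * 4^(l-1)" by (metis Suc_diff_le diff_Suc_1 power_Suc)
  then show ?thesis unfolding I_def by simp
qed

lemma sum_I_le:
  assumes l: "1 \<le> l" and G: "0 \<le> G" and g: "\<And>i. i \<in> I l \<Longrightarrow> g i \<le> G"
  shows "(\<Sum>i\<in>I l. g i / real i) \<le> 3 * G"
proof -
  have "(\<Sum>i\<in>I l. g i / real i) \<le> (\<Sum>i\<in>I l. G / 4^(l-1))"
  proof (rule sum_mono)
    fix i assume i: "i \<in> I l"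
    have i1: "real i \<ge> 4^(l-1)" using I_lower[OF i] by (metis of_nat_le_iff of_nat_numeral of_nat_power)
    have p: "(0::real) < 4^(l-1)" by simp
    have "g i / real i \<le> G / real i" using g[OF i] i1 p by (simp add: divide_right_mono)
    also have "\<dots> \<le> G / 4^(l-1)"
      by (rule divide_left_mono[OF i1 G]) (use p i1 in \<open>metis mult_pos_pos less_le_trans\<close>)
    finally show "g i / real i \<le> G / 4^(l-1)" .
  qed
  also have "\<dots> = 3 * G" using card_I[OF l] by simp
  finally show ?thesis .
qed

lemma term_bound: "\<bar>(f x - a i) / real i\<bar> \<le> 2 * Bf / real i"
proof -
  have "\<bar>f x - a i\<bar> \<le> 2 * Bf" using fB(2)[of x] a_bound[of i] by linarith
  then show ?thesis by (simp add: abs_div divide_right_mono)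
qed

lemma sum_term_bound:
  assumes "1 \<le> l" shows "\<bar>\<Sum>i\<in>I l. (f (x i) - a i) / real i\<bar> \<le> R"
proof -
  have "\<bar>\<Sum>i\<in>I l. (f (x i) - a i) / real i\<bar> \<le> (\<Sum>i\<in>I l. \<bar>(f (x i) - a i) / real i\<bar>)" by (rule sum_abs)
  also have "\<dots> = (\<Sum>i\<in>I l. \<bar>f (x i) - a i\<bar> / real i)" by (simp add: abs_div)
  also have "\<dots> \<le> 3 * (2 * Bf)"
  proof (rule sum_I_le[OF assms])
    show "0 \<le> 2 * Bf" using fB(1) by simp
    fix i show "\<bar>f (x i) - a i\<bar> \<le> 2 * Bf" using fB(2)[of "x i"] a_bound[of i] by linarith
  qed
  finally show ?thesis unfolding R_def by simp
qed

lemma Z_bound: "1 \<le> l \<Longrightarrow> \<bar>Z l \<omega>\<bar> \<le> R"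
  unfolding Z_def by (rule sum_term_bound)

lemma Zp_bound: "1 \<le> m \<Longrightarrow> \<bar>Zp k m \<omega>\<bar> \<le> R"
  unfolding Zp_def by (rule sum_term_bound)

lemma R_nonneg: "R \<ge> 0" using fB(1) by (simp add: R_def)

lemma Z_H: "Z l \<in> H"
  unfolding Z_def
  by (rule H_sum[OF sp], simp, rule H_div[OF sp], rule H_diff[OF sp fW_H H_const[OF sp]])

lemma Zp_H: "Zp k m \<in> H"
proof -
  have h: "(\<lambda>\<omega>. f ((Sn X i \<omega> - Sn X k \<omega>) / Bn E X i)) \<in> H" for i
    by (rule H_comp[OF sp f_bLip], rule H_div[OF sp], rule H_diff[OF sp Sn_H Sn_H])
  show ?thesis unfolding Zp_def
    by (rule H_sum[OF sp], simp, rule H_div[OF sp], rule H_diff[OF sp h H_const[OF sp]])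
qed

lemma T_H: "T n \<in> H"
  unfolding T_def by (rule H_sum[OF sp]) (auto intro: Z_H)

lemma T_bound: "\<bar>T n \<omega>\<bar> \<le> real n * R"
proof -
  have "\<bar>T n \<omega>\<bar> \<le> (\<Sum>l\<in>{1..n}. \<bar>Z l \<omega>\<bar>)" unfolding T_def by (rule sum_abs)
  also have "\<dots> \<le> (\<Sum>l\<in>{1..n}. R)" by (rule sum_mono) (auto intro: Z_bound)
  finally show ?thesis by simp
qed

lemma H_mult_bdd:
  assumes "U \<in> H" "V \<in> H" "\<And>\<omega>. \<bar>U \<omega>\<bar> \<le> C" "\<And>\<omega>. \<bar>V \<omega>\<bar> \<le> C"
  shows "(\<lambda>\<omega>. U \<omega> * V \<omega>) \<in> H"
proof -
  define cl where "cl t = max (- C) (min C t)" for t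
  have C: "C \<ge> 0" using assms(3)[of undefined] by linarith
  have cl_b: "\<bar>cl t\<bar> \<le> C" for t unfolding cl_def using C by auto
  have cl_l: "\<bar>cl t - cl s\<bar> \<le> \<bar>t - s\<bar>" for t s unfolding cl_def by auto
  have cl_id: "\<bar>t\<bar> \<le> C \<Longrightarrow> cl t = t" for t unfolding cl_def by auto
  define \<phi> where "\<phi> xs = cl (xs ! 0) * cl (xs ! 1)" for xs :: "real list"
  have "bLip_len 2 \<phi>"
  proof (rule bLip_lenI[of 2 _ "C * C" "2 * C"])
    fix xs :: "real list" show "\<bar>\<phi> xs\<bar> \<le> C * C" unfolding \<phi>_def
      by (simp add: abs_mult cl_b mult_mono C)
  next
    fix xs ys :: "real list"
    have e: "\<phi> xs - \<phi> ys = cl (xs ! 0) * (cl (xs ! 1) - cl (ys ! 1)) + cl (ys ! 1) * (cl (xs ! 0) - cl (ys ! 0))"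
      unfolding \<phi>_def by (simp add: algebra_simps)
    have "\<bar>\<phi> xs - \<phi> ys\<bar> \<le> \<bar>cl (xs ! 0)\<bar> * \<bar>cl (xs ! 1) - cl (ys ! 1)\<bar> + \<bar>cl (ys ! 1)\<bar> * \<bar>cl (xs ! 0) - cl (ys ! 0)\<bar>"
      unfolding e by (metis abs_mult abs_triangle_ineq)
    also have "\<dots> \<le> C * \<bar>xs ! 1 - ys ! 1\<bar> + C * \<bar>xs ! 0 - ys ! 0\<bar>"
      by (intro add_mono mult_mono) (auto simp: cl_b cl_l C)
    also have "\<dots> \<le> 2 * C * (\<Sum>i<2. \<bar>xs ! i - ys ! i\<bar>)"
      using C by (simp add: numeral_2_eq_2 algebra_simps)
    finally show "\<bar>\<phi> xs - \<phi> ys\<bar> \<le> 2 * C * (\<Sum>i<2. \<bar>xs ! i - ys ! i\<bar>)" .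
  qed
  then have "bLip_len (length [U, V]) \<phi>" by (simp add: numeral_2_eq_2)
  then have "(\<lambda>\<omega>. \<phi> (map (\<lambda>X. X \<omega>) [U, V])) \<in> H"
    using H_list[OF sp, of "[U, V]" \<phi>] assms(1,2) by simp
  moreover have "\<phi> (map (\<lambda>X. X \<omega>) [U, V]) = U \<omega> * V \<omega>" for \<omega>
    unfolding \<phi>_def using cl_id assms(3,4) by simp
  ultimately show ?thesis by simp
qed

end


lemma min_sq_lip: "\<bar>min (x\<^sup>2) (r\<^sup>2) - min (y\<^sup>2) (r\<^sup>2)\<bar> \<le> 2 * \<bar>r\<bar> * \<bar>x - y\<bar>" for x y r :: real
proof -
  define u where "u = min \<bar>x\<bar> \<bar>r\<bar>"
  define v where "v = min \<bar>y\<bar> \<bar>r\<bar>"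
  have eu: "min (x\<^sup>2) (r\<^sup>2) = u\<^sup>2" unfolding u_def
    by (metis abs_ge_zero min_def power2_abs power_mono min.absorb_iff1 abs_le_square_iff)
  have ev: "min (y\<^sup>2) (r\<^sup>2) = v\<^sup>2" unfolding v_def
    by (metis abs_ge_zero min_def power2_abs power_mono min.absorb_iff1 abs_le_square_iff)
  have "\<bar>u\<^sup>2 - v\<^sup>2\<bar> = \<bar>u - v\<bar> * \<bar>u + v\<bar>" by (simp add: power2_eq_square algebra_simps abs_mult[symmetric])
  also have "\<dots> \<le> \<bar>x - y\<bar> * (2 * \<bar>r\<bar>)"
  proof (rule mult_mono)
    show "\<bar>u - v\<bar> \<le> \<bar>x - y\<bar>" unfolding u_def v_def by (auto simp: min_def abs_if split: if_splits)
    show "\<bar>u + v\<bar> \<le> 2 * \<bar>r\<bar>" unfolding u_def v_def by (auto simp: min_def)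
  qed auto
  finally show ?thesis using eu ev by (simp add: algebra_simps)
qed

lemma min_sq_bLip: "bLip1 (\<lambda>t. min (t\<^sup>2) (r\<^sup>2))"
  by (rule bLip1I[of _ "r\<^sup>2" "2 * \<bar>r\<bar>"]) (auto simp: min_sq_lip)

lemma psum_vec: "i \<le> N \<Longrightarrow> (\<Sum>j<i. vec X N \<omega> ! j) = Sn X i \<omega>"
  using sum_bounds_lt_plus1[of "\<lambda>j. X j \<omega>" i] by (simp add: nth_vec Sn_def)

lemma psum_snoc: "length zs = N \<Longrightarrow> (\<Sum>i<Suc N. (zs @ [y]) ! i) = (\<Sum>i<N. zs ! i) + y"
  by (simp add: nth_append)

context setting begin

lemma E_lin0: assumes "1 \<le> i" shows "E (\<lambda>\<omega>. c * X i \<omega>) = 0"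
proof (cases "c \<ge> 0")
  case True then show ?thesis using E_hom[OF sp XH[OF assms] True] mean1[OF assms] by simp
next
  case False
  have "E (\<lambda>\<omega>. c * X i \<omega>) = E (\<lambda>\<omega>. (-c) * (- X i \<omega>))" by simp
  also have "\<dots> = 0" using E_hom[OF sp H_minus[OF sp XH[OF assms]], of "-c"] False mean2[OF assms] by simp
  finally show ?thesis .
qed

lemma second_moment: "E (\<lambda>\<omega>. min ((Sn X k \<omega>)\<^sup>2) (r\<^sup>2)) \<le> K2 * real k"
proof (induction k)
  case 0 then show ?case by (simp add: Sn_def E_const[OF sp])
next
  case (Suc j)
  define h where "h t = min (t\<^sup>2) (r\<^sup>2)" for t
  have hL: "bLip1 h" unfolding h_def by (rule min_sq_bLip)
  have hS_H: "(\<lambda>\<omega>. h (Sn X n \<omega>)) \<in> H" for n by (rule H_comp[OF sp hL Sn_H])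
  define Y where "Y = X (Suc j)"
  have YH: "Y \<in> H" unfolding Y_def by (rule XH) simp
  have Y2: "(\<lambda>\<omega>. (Y \<omega>)\<^sup>2) \<in> H" "E (\<lambda>\<omega>. (Y \<omega>)\<^sup>2) \<le> K2" unfolding Y_def by (auto intro: X2H K2)
  have Ylin: "E (\<lambda>\<omega>. c * Y \<omega>) = 0" for c unfolding Y_def by (rule E_lin0) simp
  define \<psi> where "\<psi> t = E (\<lambda>\<omega>. h (t + Y \<omega>))" for t
  have inH: "(\<lambda>\<omega>. h (t + Y \<omega>)) \<in> H" for t
  proof -
    have "bLip1 (\<lambda>y. h (t + y))"
    proof (rule bLip1I[of _ "r\<^sup>2" "2 * \<bar>r\<bar>"])
      fix x y show "\<bar>h (t + x) - h (t + y)\<bar> \<le> 2 * \<bar>r\<bar> * \<bar>x - y\<bar>"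
        using min_sq_lip[of "t + x" r "t + y"] by (simp add: h_def)
    qed (auto simp: h_def)
    then show ?thesis by (rule H_comp[OF sp _ YH])
  qed
  have psiL: "bLip1 \<psi>" unfolding \<psi>_def
  proof (rule E_param_bLip[OF sp, where B="r\<^sup>2" and L="2 * \<bar>r\<bar>"])
    fix t show "(\<lambda>\<omega>. h (t + Y \<omega>)) \<in> H" by (rule inH)
  next
    fix t \<omega> show "\<bar>h (t + Y \<omega>)\<bar> \<le> r\<^sup>2" by (simp add: h_def)
  next
    fix t s \<omega> show "\<bar>h (t + Y \<omega>) - h (s + Y \<omega>)\<bar> \<le> 2 * \<bar>r\<bar> * \<bar>t - s\<bar>"
      using min_sq_lip[of "t + Y \<omega>" r "s + Y \<omega>"] by (simp add: h_def)
  qed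
  have psi_le: "\<psi> t \<le> h t + K2" for t
  proof (cases "r\<^sup>2 \<le> t\<^sup>2")
    case True
    have "\<psi> t \<le> r\<^sup>2" unfolding \<psi>_def by (rule E_mono_c[OF sp inH]) (simp add: h_def)
    then show ?thesis using True K2(1) by (simp add: h_def)
  next
    case False
    have pw: "h (t + Y \<omega>) \<le> ((2 * t) * Y \<omega> + (Y \<omega>)\<^sup>2) + t\<^sup>2" for \<omega>
      by (simp add: h_def power2_eq_square algebra_simps)
    have H1: "(\<lambda>\<omega>. (2 * t) * Y \<omega> + (Y \<omega>)\<^sup>2) \<in> H" by (rule H_add[OF sp H_scale[OF sp YH] Y2(1)])
    have "\<psi> t \<le> E (\<lambda>\<omega>. (2 * t) * Y \<omega> + (Y \<omega>)\<^sup>2) + t\<^sup>2" unfolding \<psi>_def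
      by (rule E_le_shift[OF sp inH H1]) (rule pw)
    also have "\<dots> \<le> (E (\<lambda>\<omega>. (2 * t) * Y \<omega>) + E (\<lambda>\<omega>. (Y \<omega>)\<^sup>2)) + t\<^sup>2"
      using E_add[OF sp H_scale[OF sp YH] Y2(1)] by simp
    also have "\<dots> \<le> K2 + t\<^sup>2" using Ylin Y2(2) by simp
    finally show ?thesis using False by (simp add: h_def)
  qed
  show ?case
  proof (cases "j = 0")
    case True
    have "E (\<lambda>\<omega>. h (Sn X (Suc j) \<omega>)) \<le> E (\<lambda>\<omega>. (Y \<omega>)\<^sup>2)"
      by (rule E_mono[OF sp hS_H Y2(1)]) (simp add: True Sn_def Y_def h_def)
    then show ?thesis using Y2(2) True by (simp add: h_def)
  next
    case False
    define \<phi> where "\<phi> zs = h (\<Sum>i\<in>{..<Suc j}. zs ! i)" for zs :: "real list"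
    have phiL: "bLip_len (Suc j) \<phi>" unfolding \<phi>_def by (rule bLip_len_psum[OF hL]) simp
    have e1: "\<phi> (vec X j \<omega> @ [y]) = h (Sn X j \<omega> + y)" for \<omega> y
      unfolding \<phi>_def using psum_snoc[of "vec X j \<omega>" j y] psum_vec[of j j X \<omega>] by simp
    have e2: "\<phi> (vec X j \<omega> @ [X (Suc j) \<omega>]) = h (Sn X (Suc j) \<omega>)" for \<omega>
      unfolding \<phi>_def vec_Suc[symmetric] using psum_vec[of "Suc j" "Suc j" X \<omega>] by simp
    have "E (\<lambda>\<omega>. h (Sn X (Suc j) \<omega>)) = E (\<lambda>\<omega>. E (\<lambda>\<omega>'. \<phi> (vec X j \<omega> @ [X (Suc j) \<omega>'])))"
      using indep_step[OF sp XH ind _ phiL] False e2 by simp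
    also have "\<dots> = E (\<lambda>\<omega>. \<psi> (Sn X j \<omega>))" unfolding \<psi>_def e1 Y_def by simp
    also have "\<dots> \<le> E (\<lambda>\<omega>. h (Sn X j \<omega>)) + K2"
      by (rule E_le_shift[OF sp H_comp[OF sp psiL Sn_H] hS_H]) (rule psi_le)
    also have "\<dots> \<le> K2 * real (Suc j)" using Suc.IH by (simp add: h_def algebra_simps)
    finally show ?thesis by (simp add: h_def)
  qed
qed

lemma mf_H: "mf k i \<in> H"
proof -
  define u where "u = Lf / Bn E X i"
  have "Bn E X i \<ge> 0" unfolding Bn_def by (simp add: sum_nonneg)
  then have u0: "u \<ge> 0" unfolding u_def using fL(1) by (simp add: divide_nonneg_nonneg)
  have bl: "bLip1 (\<lambda>t. min (2 * Bf) (u * \<bar>t\<bar>))"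
  proof (rule bLip1I[of _ "2 * Bf" "\<bar>u\<bar>"])
    fix x y :: real
    show "\<bar>min (2 * Bf) (u * \<bar>x\<bar>) - min (2 * Bf) (u * \<bar>y\<bar>)\<bar> \<le> \<bar>u\<bar> * \<bar>x - y\<bar>"
    proof -
      have "\<bar>u * \<bar>x\<bar> - u * \<bar>y\<bar>\<bar> \<le> \<bar>u\<bar> * \<bar>x - y\<bar>"
        by (metis abs_mult abs_triangle_ineq3 mult_left_mono abs_ge_zero right_diff_distrib)
      then show ?thesis by (simp add: min_def abs_if split: if_splits; linarith)
    qed
  next
    fix x :: real
    show "\<bar>min (2 * Bf) (u * \<bar>x\<bar>)\<bar> \<le> 2 * Bf"
      using u0 fB(1) mult_nonneg_nonneg[OF u0 abs_ge_zero[of x]] by (auto simp: min_def)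
  qed
  show ?thesis unfolding mf_def u_def[symmetric] by (rule H_comp[OF sp bl Sn_H])
qed

end


context setting begin

lemma mf_E:
  assumes k: "1 \<le> k" and i: "1 \<le> i"
  shows "E (mf k i) \<le> Lf / Bn E X i * sqrt (K2 * real k)"
proof -
  define u where "u = Lf / Bn E X i"
  have u: "u > 0" unfolding u_def using fL(1) Bn_pos[OF i] by simp
  define lam where "lam = u * sqrt (K2 * real k)"
  have lam: "lam > 0" unfolding lam_def using u K2(1) k by simp
  define r where "r = 2 * Bf / u"
  define hS where "hS \<omega> = min ((Sn X k \<omega>)\<^sup>2) (r\<^sup>2)" for \<omega>
  have hS_H: "hS \<in> H" unfolding hS_def
    using H_comp[OF sp min_sq_bLip[of r] Sn_H[of k]] by simp
  have pw: "mf k i \<omega> \<le> (u\<^sup>2 / (2 * lam)) * hS \<omega> + lam / 2" for \<omega>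
  proof -
    define t where "t = u * \<bar>Sn X k \<omega>\<bar>"
    have t0: "t \<ge> 0" unfolding t_def using u by simp
    define w where "w = min (2 * Bf) t"
    have w0: "w \<ge> 0" unfolding w_def using t0 fB(1) by simp
    have mfw: "mf k i \<omega> = w" unfolding mf_def w_def t_def u_def by simp
    have "u\<^sup>2 * hS \<omega> = min (u\<^sup>2 * (Sn X k \<omega>)\<^sup>2) (u\<^sup>2 * r\<^sup>2)"
      unfolding hS_def using u by (simp add: min_def)
    also have "\<dots> = min (t\<^sup>2) ((2 * Bf)\<^sup>2)"
      unfolding t_def r_def using u by (simp add: power_mult_distrib power2_abs field_simps)
    also have "\<dots> = w\<^sup>2"
    proof (cases "t \<le> 2 * Bf")
      case True
      then have "t\<^sup>2 \<le> (2 * Bf)\<^sup>2" using t0 by (intro power_mono) auto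
      then show ?thesis unfolding w_def using True by (simp only: min.absorb1 min.absorb2)
    next
      case False
      then have "(2 * Bf)\<^sup>2 \<le> t\<^sup>2" using fB(1) by (intro power_mono) auto
      then show ?thesis unfolding w_def using False by (simp only: min.absorb1 min.absorb2 not_le less_imp_le)
    qed
    finally have e: "u\<^sup>2 * hS \<omega> = w\<^sup>2" .
    have "w \<le> w\<^sup>2 / (2 * lam) + lam / 2"
    proof -
      have "0 \<le> (w - lam)\<^sup>2" by simp
      then have "2 * lam * w \<le> w\<^sup>2 + lam\<^sup>2" by (simp add: power2_eq_square algebra_simps)
      then show ?thesis using lam by (simp add: field_simps power2_eq_square)
    qed
    also have "w\<^sup>2 / (2 * lam) = (u\<^sup>2 / (2 * lam)) * hS \<omega>" using e by simp
    finally show ?thesis using mfw by simp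
  qed
  have c0': "u\<^sup>2 / (2 * lam) \<ge> 0" using lam by simp
  have "E (mf k i) \<le> E (\<lambda>\<omega>. (u\<^sup>2 / (2 * lam)) * hS \<omega>) + lam / 2"
    by (rule E_le_shift[OF sp mf_H H_scale[OF sp hS_H]]) (rule pw)
  also have "\<dots> = (u\<^sup>2 / (2 * lam)) * E hS + lam / 2" using E_hom[OF sp hS_H c0'] by simp
  also have "\<dots> \<le> (u\<^sup>2 / (2 * lam)) * (K2 * real k) + lam / 2"
    using mult_left_mono[OF second_moment[of k r] c0'] unfolding hS_def by simp
  also have "\<dots> = lam"
  proof -
    have "lam\<^sup>2 = u\<^sup>2 * (K2 * real k)" unfolding lam_def using K2(1) by (simp add: power_mult_distrib)
    then show ?thesis using lam by (simp add: field_simps power2_eq_square)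
  qed
  finally show ?thesis unfolding lam_def u_def .
qed

lemma Wn_eq: "Wn E X i \<omega> = Sn X i \<omega> / Bn E X i" by (simp add: Wn_def)

lemma mf_pw:
  assumes i: "1 \<le> i"
  shows "\<bar>f (Wn E X i \<omega>) - f ((Sn X i \<omega> - Sn X k \<omega>) / Bn E X i)\<bar> \<le> mf k i \<omega>"
proof -
  have B: "Bn E X i > 0" by (rule Bn_pos[OF i])
  have d: "Wn E X i \<omega> - (Sn X i \<omega> - Sn X k \<omega>) / Bn E X i = Sn X k \<omega> / Bn E X i"
    unfolding Wn_eq using B by (simp add: field_simps)
  have "\<bar>f (Wn E X i \<omega>) - f ((Sn X i \<omega> - Sn X k \<omega>) / Bn E X i)\<bar> \<le> Lf * \<bar>Sn X k \<omega> / Bn E X i\<bar>"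
    using fL(2)[of "Wn E X i \<omega>" "(Sn X i \<omega> - Sn X k \<omega>) / Bn E X i"] d by simp
  also have "\<dots> = Lf / Bn E X i * \<bar>Sn X k \<omega>\<bar>" using B by (simp add: abs_div)
  finally have 1: "\<bar>f (Wn E X i \<omega>) - f ((Sn X i \<omega> - Sn X k \<omega>) / Bn E X i)\<bar> \<le> Lf / Bn E X i * \<bar>Sn X k \<omega>\<bar>" .
  have 2: "\<bar>f (Wn E X i \<omega>) - f ((Sn X i \<omega> - Sn X k \<omega>) / Bn E X i)\<bar> \<le> 2 * Bf"
    using fB(2)[of "Wn E X i \<omega>"] fB(2)[of "(Sn X i \<omega> - Sn X k \<omega>) / Bn E X i"] by linarith
  show ?thesis unfolding mf_def using 1 2 by simp
qed

lemma f_aff: "bLip1 (\<lambda>t. (f (t / b) - c) / r)"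
proof (rule bLip1I[of _ "(Bf + \<bar>c\<bar>) / \<bar>r\<bar>" "Lf / (\<bar>b\<bar> * \<bar>r\<bar>)"])
  fix x
  have "\<bar>f (x / b) - c\<bar> \<le> Bf + \<bar>c\<bar>" using fB(2)[of "x / b"] by linarith
  then show "\<bar>(f (x / b) - c) / r\<bar> \<le> (Bf + \<bar>c\<bar>) / \<bar>r\<bar>" by (simp add: abs_div divide_right_mono)
next
  fix x y
  have "\<bar>f (x / b) - f (y / b)\<bar> \<le> Lf * \<bar>x / b - y / b\<bar>" by (rule fL(2))
  also have "\<dots> = Lf * \<bar>x - y\<bar> / \<bar>b\<bar>" by (simp add: diff_divide_distrib[symmetric] abs_div)
  finally have "\<bar>f (x / b) - f (y / b)\<bar> / \<bar>r\<bar> \<le> Lf * \<bar>x - y\<bar> / \<bar>b\<bar> / \<bar>r\<bar>"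
    by (rule divide_right_mono) simp
  moreover have "(f (x / b) - c) / r - (f (y / b) - c) / r = (f (x / b) - f (y / b)) / r"
    by (simp add: diff_divide_distrib)
  ultimately show "\<bar>(f (x / b) - c) / r - (f (y / b) - c) / r\<bar> \<le> Lf / (\<bar>b\<bar> * \<bar>r\<bar>) * \<bar>x - y\<bar>"
    by (simp add: abs_div)
qed

definition Gl :: "nat \<Rightarrow> real list \<Rightarrow> real" where
  "Gl l zs = (\<Sum>i\<in>I l. (f ((\<Sum>j\<in>{..<i}. zs ! j) / Bn E X i) - a i) / real i)"
definition Hk :: "nat \<Rightarrow> nat \<Rightarrow> real list \<Rightarrow> real" where
  "Hk k m zs = (\<Sum>i\<in>I m. (f ((\<Sum>j\<in>{k..<i}. zs ! j) / Bn E X i) - a i) / real i)"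

lemma Gl_bLip: assumes "4^l \<le> N" shows "bLip_len N (Gl l)"
  unfolding Gl_def
proof (rule bLip_len_sum, simp)
  fix i assume "i \<in> I l"
  then have "{..<i} \<subseteq> {..<N}" using assms unfolding I_def by auto
  then show "bLip_len N (\<lambda>zs. (f ((\<Sum>j\<in>{..<i}. zs ! j) / Bn E X i) - a i) / real i)"
    using bLip_len_psum[OF f_aff[of "Bn E X i" "a i" "real i"]] by blast
qed

lemma Hk_bLip: assumes "4^m \<le> N" shows "bLip_len N (Hk k m)"
  unfolding Hk_def
proof (rule bLip_len_sum, simp)
  fix i assume "i \<in> I m"
  then have "{k..<i} \<subseteq> {..<N}" using assms unfolding I_def by auto
  then show "bLip_len N (\<lambda>zs. (f ((\<Sum>j\<in>{k..<i}. zs ! j) / Bn E X i) - a i) / real i)"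
    using bLip_len_psum[OF f_aff[of "Bn E X i" "a i" "real i"]] by blast
qed

lemma Gl_vec: assumes "4^l \<le> N" shows "Gl l (vec X N \<omega>) = Z l \<omega>"
  unfolding Gl_def Z_def
proof (rule sum.cong[OF refl])
  fix i assume "i \<in> I l"
  then have "i \<le> N" using assms unfolding I_def by auto
  then show "(f ((\<Sum>j\<in>{..<i}. vec X N \<omega> ! j) / Bn E X i) - a i) / real i = (f (Wn E X i \<omega>) - a i) / real i"
    by (simp add: psum_vec Wn_eq)
qed

lemma psum_vec2:
  assumes "k \<le> i" "i \<le> N"
  shows "(\<Sum>j\<in>{k..<i}. vec X N \<omega> ! j) = Sn X i \<omega> - Sn X k \<omega>"
proof -
  have u: "{..<i} = {..<k} \<union> {k..<i}" using assms by auto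
  have "(\<Sum>j\<in>{..<i}. vec X N \<omega> ! j) = (\<Sum>j\<in>{..<k}. vec X N \<omega> ! j) + (\<Sum>j\<in>{k..<i}. vec X N \<omega> ! j)"
    unfolding u by (rule sum.union_disjoint) auto
  then show ?thesis using psum_vec[of i N X \<omega>] psum_vec[of k N X \<omega>] assms by simp
qed

lemma Hk_vec: assumes "1 \<le> m" "k \<le> 4^(m-1)" "4^m \<le> N" shows "Hk k m (vec X N \<omega>) = Zp k m \<omega>"
  unfolding Hk_def Zp_def
proof (rule sum.cong[OF refl])
  fix i assume "i \<in> I m"
  then have "k \<le> i" "i \<le> N" using assms unfolding I_def by auto
  then show "(f ((\<Sum>j\<in>{k..<i}. vec X N \<omega> ! j) / Bn E X i) - a i) / real i =
      (f ((Sn X i \<omega> - Sn X k \<omega>) / Bn E X i) - a i) / real i"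
    by (simp add: psum_vec2)
qed

lemma Gl_app: assumes "length c = k" "4^l \<le> k" shows "Gl l (c @ rest) = Gl l c"
  unfolding Gl_def
proof (rule sum.cong[OF refl])
  fix i assume "i \<in> I l"
  then have "i \<le> k" using assms unfolding I_def by auto
  then have "(\<Sum>j\<in>{..<i}. (c @ rest) ! j) = (\<Sum>j\<in>{..<i}. c ! j)"
    using assms(1) by (intro sum.cong) (auto simp: nth_append)
  then show "(f ((\<Sum>j\<in>{..<i}. (c @ rest) ! j) / Bn E X i) - a i) / real i =
      (f ((\<Sum>j\<in>{..<i}. c ! j) / Bn E X i) - a i) / real i" by simp
qed

lemma Hk_app: assumes "length c = k" "k \<le> length v" shows "Hk k m (c @ drop k v) = Hk k m v"
  unfolding Hk_def
proof (rule sum.cong[OF refl])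
  fix i
  have "(\<Sum>j\<in>{k..<i}. (c @ drop k v) ! j) = (\<Sum>j\<in>{k..<i}. v ! j)"
    using assms by (intro sum.cong) (auto simp: nth_append nth_drop)
  then show "(f ((\<Sum>j\<in>{k..<i}. (c @ drop k v) ! j) / Bn E X i) - a i) / real i =
      (f ((\<Sum>j\<in>{k..<i}. v ! j) / Bn E X i) - a i) / real i" by simp
qed

lemma Gl_bound: "1 \<le> l \<Longrightarrow> \<bar>Gl l c\<bar> \<le> R"
  unfolding Gl_def by (rule sum_term_bound)

end


context setting begin

lemma E_divc: assumes "U \<in> H" "r > 0" shows "E (\<lambda>\<omega>. (U \<omega> + c) / r) = (E U + c) / r"
proof -
  have "E (\<lambda>\<omega>. (U \<omega> + c) / r) = E (\<lambda>\<omega>. (1 / r) * (U \<omega> + c))" by simp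
  also have "\<dots> = (1 / r) * E (\<lambda>\<omega>. U \<omega> + c)"
    by (rule E_hom[OF sp H_addc[OF sp assms(1)]]) (use assms(2) in simp)
  also have "\<dots> = (E U + c) / r" using E_shift[OF sp assms(1)] by simp
  finally show ?thesis .
qed

lemma E_div: assumes "U \<in> H" "r > 0" shows "E (\<lambda>\<omega>. U \<omega> / r) = E U / r"
  using E_divc[OF assms, of 0] by simp

lemma pow4_mono: "l \<le> m \<Longrightarrow> (4::nat)^l \<le> 4^m" by (simp add: power_increasing)

lemma E_gZ: assumes "\<bar>g\<bar> \<le> R" "U \<in> H"
  shows "E (\<lambda>\<omega>. g * U \<omega>) \<le> R * (max (E U) 0 + max (E (\<lambda>\<omega>. - U \<omega>)) 0)"
proof (cases "g \<ge> 0")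
  case True
  have "E (\<lambda>\<omega>. g * U \<omega>) = g * E U" by (rule E_hom[OF sp assms(2) True])
  also have "\<dots> \<le> g * max (E U) 0" using True by (intro mult_left_mono) auto
  also have "\<dots> \<le> R * max (E U) 0" using assms(1) True by (intro mult_right_mono) auto
  also have "\<dots> \<le> R * (max (E U) 0 + max (E (\<lambda>\<omega>. - U \<omega>)) 0)" using R_nonneg by (intro mult_left_mono) auto
  finally show ?thesis .
next
  case False
  have "E (\<lambda>\<omega>. g * U \<omega>) = E (\<lambda>\<omega>. (- g) * (- U \<omega>))" by simp
  also have "\<dots> = (- g) * E (\<lambda>\<omega>. - U \<omega>)" using False by (intro E_hom[OF sp H_minus[OF sp assms(2)]]) auto
  also have "\<dots> \<le> (- g) * max (E (\<lambda>\<omega>. - U \<omega>)) 0" using False by (intro mult_left_mono) auto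
  also have "\<dots> \<le> R * max (E (\<lambda>\<omega>. - U \<omega>)) 0" using assms(1) False by (intro mult_right_mono) auto
  also have "\<dots> \<le> R * (max (E U) 0 + max (E (\<lambda>\<omega>. - U \<omega>)) 0)" using R_nonneg by (intro mult_left_mono) auto
  finally show ?thesis .
qed

lemma ZZp_le:
  assumes l: "1 \<le> l" "l < m"
  shows "E (\<lambda>\<omega>. Z l \<omega> * Zp (4^l) m \<omega>) \<le>
      R * (max (E (Zp (4^l) m)) 0 + max (E (\<lambda>\<omega>. - Zp (4^l) m \<omega>)) 0)"
    (is "_ \<le> ?D")
proof -
  define k :: nat where "k = 4^l"
  define N :: nat where "N = 4^m"
  have m1: "1 \<le> m" using l by simp
  have k1: "1 \<le> k" unfolding k_def by simp
  have kmm: "k \<le> 4^(m-1)" unfolding k_def using l by (intro pow4_mono) simp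
  have kN: "k \<le> N" unfolding k_def N_def using l by (intro pow4_mono) simp
  have lN: "4^l \<le> N" using kN by (simp add: k_def)
  define \<Phi> where "\<Phi> zs = Gl l zs * Hk k m zs" for zs
  have PhiL: "bLip_len (k + (N - k)) \<Phi>"
    unfolding \<Phi>_def using bLip_len_mult[OF Gl_bLip[OF lN] Hk_bLip[of m N k]] kN by (simp add: N_def)
  have "E (\<lambda>\<omega>. \<Phi> (vec X (k + (N - k)) \<omega>)) \<le> ?D"
  proof (rule block_le[OF sp XH ind k1 PhiL])
    fix c :: "real list" assume c: "length c = k"
    have "\<Phi> (c @ drop k (vec X (k + (N - k)) \<omega>)) = Gl l c * Zp (4^l) m \<omega>" for \<omega>
    proof -
      have v: "vec X (k + (N - k)) \<omega> = vec X N \<omega>" using kN by simp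
      have "Gl l (c @ drop k (vec X N \<omega>)) = Gl l c" by (rule Gl_app[OF c]) (simp add: k_def)
      moreover have "Hk k m (c @ drop k (vec X N \<omega>)) = Hk k m (vec X N \<omega>)"
        by (rule Hk_app[OF c]) (simp add: kN)
      moreover have "Hk k m (vec X N \<omega>) = Zp k m \<omega>" by (rule Hk_vec[OF m1 kmm]) (simp add: N_def)
      ultimately show ?thesis unfolding \<Phi>_def v by (simp add: k_def)
    qed
    then show "E (\<lambda>\<omega>. \<Phi> (c @ drop k (vec X (k + (N - k)) \<omega>))) \<le> ?D"
      using E_gZ[OF Gl_bound[OF l(1)] Zp_H] by simp
  qed
  moreover have "\<Phi> (vec X (k + (N - k)) \<omega>) = Z l \<omega> * Zp (4^l) m \<omega>" for \<omega>
  proof -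
    have v: "vec X (k + (N - k)) \<omega> = vec X N \<omega>" using kN by simp
    show ?thesis unfolding \<Phi>_def v using Gl_vec[OF lN] Hk_vec[OF m1 kmm, of N] by (simp add: N_def k_def)
  qed
  ultimately show ?thesis by simp
qed

end


context setting begin

lemma I_pos: "1 \<le> m \<Longrightarrow> i \<in> I m \<Longrightarrow> real i > 0"
  using I_ge1 by fastforce

lemma fV_H: "(\<lambda>\<omega>. f ((Sn X i \<omega> - Sn X k \<omega>) / Bn E X i)) \<in> H"
  by (rule H_comp[OF sp f_bLip], rule H_div[OF sp], rule H_diff[OF sp Sn_H Sn_H])

lemma Zp_upper:
  assumes m: "1 \<le> m"
  shows "E (Zp k m) \<le> (\<Sum>i\<in>I m. E (mf k i) / real i)"
proof -
  define F1 where "F1 i \<omega> = (f (Wn E X i \<omega>) + - a i) / real i" for i \<omega>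
  define F2 where "F2 i \<omega> = mf k i \<omega> / real i" for i \<omega>
  have F1H: "F1 i \<in> H" for i unfolding F1_def by (rule H_div[OF sp H_addc[OF sp fW_H]])
  have F2H: "F2 i \<in> H" for i unfolding F2_def by (rule H_div[OF sp mf_H])
  have F12H: "(\<lambda>\<omega>. F1 i \<omega> + F2 i \<omega>) \<in> H" for i by (rule H_add[OF sp F1H F2H])
  have "E (Zp k m) \<le> E (\<lambda>\<omega>. \<Sum>i\<in>I m. F1 i \<omega> + F2 i \<omega>)"
  proof (rule E_mono[OF sp Zp_H H_sum[OF sp fin_I F12H]])
    fix \<omega>
    show "Zp k m \<omega> \<le> (\<Sum>i\<in>I m. F1 i \<omega> + F2 i \<omega>)"
      unfolding Zp_def
    proof (rule sum_mono)
      fix i assume i: "i \<in> I m"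
      have ip: "real i > 0" by (rule I_pos[OF m i])
      have "f ((Sn X i \<omega> - Sn X k \<omega>) / Bn E X i) - a i \<le> (f (Wn E X i \<omega>) + - a i) + mf k i \<omega>"
        using mf_pw[OF I_ge1[OF m i], of \<omega> k] by linarith
      then have "(f ((Sn X i \<omega> - Sn X k \<omega>) / Bn E X i) - a i) / real i \<le> ((f (Wn E X i \<omega>) + - a i) + mf k i \<omega>) / real i"
        using ip by (simp add: divide_right_mono)
      then show "(f ((Sn X i \<omega> - Sn X k \<omega>) / Bn E X i) - a i) / real i \<le> F1 i \<omega> + F2 i \<omega>"
        unfolding F1_def F2_def by (simp add: add_divide_distrib)
    qed
  qed
  also have "\<dots> \<le> (\<Sum>i\<in>I m. E (\<lambda>\<omega>. F1 i \<omega> + F2 i \<omega>))" by (rule E_sum_le[OF sp fin_I F12H])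
  also have "\<dots> \<le> (\<Sum>i\<in>I m. E (F1 i) + E (F2 i))"
    by (rule sum_mono, rule E_add[OF sp F1H F2H])
  also have "\<dots> = (\<Sum>i\<in>I m. E (mf k i) / real i)"
  proof (rule sum.cong[OF refl])
    fix i assume i: "i \<in> I m"
    have ip: "real i > 0" by (rule I_pos[OF m i])
    have "E (F1 i) = (E (\<lambda>\<omega>. f (Wn E X i \<omega>)) + - a i) / real i"
      unfolding F1_def by (rule E_divc[OF fW_H ip])
    then have "E (F1 i) = 0" by (simp add: a_def)
    moreover have "E (F2 i) = E (mf k i) / real i" unfolding F2_def by (rule E_div[OF mf_H ip])
    ultimately show "E (F1 i) + E (F2 i) = E (mf k i) / real i" by simp
  qed
  finally show ?thesis .
qed

lemma Zp_lower:
  assumes m: "1 \<le> m"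
  shows "E (\<lambda>\<omega>. - Zp k m \<omega>) \<le> (\<Sum>i\<in>I m. (Ce * (1/q)^(m-1) + E (mf k i)) / real i)"
proof -
  define F1 where "F1 i \<omega> = (- f (Wn E X i \<omega>) + a i) / real i" for i \<omega>
  define F2 where "F2 i \<omega> = mf k i \<omega> / real i" for i \<omega>
  have F1H: "F1 i \<in> H" for i unfolding F1_def by (rule H_div[OF sp H_addc[OF sp H_minus[OF sp fW_H]]])
  have F2H: "F2 i \<in> H" for i unfolding F2_def by (rule H_div[OF sp mf_H])
  have F12H: "(\<lambda>\<omega>. F1 i \<omega> + F2 i \<omega>) \<in> H" for i by (rule H_add[OF sp F1H F2H])
  have "E (\<lambda>\<omega>. - Zp k m \<omega>) \<le> E (\<lambda>\<omega>. \<Sum>i\<in>I m. F1 i \<omega> + F2 i \<omega>)"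
  proof (rule E_mono[OF sp H_minus[OF sp Zp_H] H_sum[OF sp fin_I F12H]])
    fix \<omega>
    show "- Zp k m \<omega> \<le> (\<Sum>i\<in>I m. F1 i \<omega> + F2 i \<omega>)"
      unfolding Zp_def sum_negf[symmetric]
    proof (rule sum_mono)
      fix i assume i: "i \<in> I m"
      have ip: "real i > 0" by (rule I_pos[OF m i])
      have "- (f ((Sn X i \<omega> - Sn X k \<omega>) / Bn E X i) - a i) \<le> (- f (Wn E X i \<omega>) + a i) + mf k i \<omega>"
        using mf_pw[OF I_ge1[OF m i], of \<omega> k] by linarith
      then have "- (f ((Sn X i \<omega> - Sn X k \<omega>) / Bn E X i) - a i) / real i \<le> ((- f (Wn E X i \<omega>) + a i) + mf k i \<omega>) / real i"
        using ip by (simp add: divide_right_mono)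
      moreover have "- ((f ((Sn X i \<omega> - Sn X k \<omega>) / Bn E X i) - a i) / real i) = - (f ((Sn X i \<omega> - Sn X k \<omega>) / Bn E X i) - a i) / real i"
        by (simp add: minus_divide_left)
      moreover have "((- f (Wn E X i \<omega>) + a i) + mf k i \<omega>) / real i = F1 i \<omega> + F2 i \<omega>"
        unfolding F1_def F2_def by (simp add: add_divide_distrib)
      ultimately show "- ((f ((Sn X i \<omega> - Sn X k \<omega>) / Bn E X i) - a i) / real i) \<le> F1 i \<omega> + F2 i \<omega>"
        by simp
    qed
  qed
  also have "\<dots> \<le> (\<Sum>i\<in>I m. E (\<lambda>\<omega>. F1 i \<omega> + F2 i \<omega>))" by (rule E_sum_le[OF sp fin_I F12H])
  also have "\<dots> \<le> (\<Sum>i\<in>I m. E (F1 i) + E (F2 i))"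
    by (rule sum_mono, rule E_add[OF sp F1H F2H])
  also have "\<dots> \<le> (\<Sum>i\<in>I m. (Ce * (1/q)^(m-1) + E (mf k i)) / real i)"
  proof (rule sum_mono)
    fix i assume i: "i \<in> I m"
    have ip: "real i > 0" by (rule I_pos[OF m i])
    have "E (F1 i) = (E (\<lambda>\<omega>. - f (Wn E X i \<omega>)) + a i) / real i"
      unfolding F1_def by (rule E_divc[OF H_minus[OF sp fW_H] ip])
    also have "\<dots> \<le> Ce * (1/q)^(m-1) / real i"
      using songb[OF m, of i] i ip unfolding a_def I_def by (simp add: divide_right_mono add.commute)
    finally have "E (F1 i) \<le> Ce * (1/q)^(m-1) / real i" .
    moreover have "E (F2 i) = E (mf k i) / real i" unfolding F2_def by (rule E_div[OF mf_H ip])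
    ultimately show "E (F1 i) + E (F2 i) \<le> (Ce * (1/q)^(m-1) + E (mf k i)) / real i"
      by (simp add: add_divide_distrib)
  qed
  finally show ?thesis .
qed

lemma ZZ_le:
  assumes l: "1 \<le> l" and m: "1 \<le> m"
  shows "E (\<lambda>\<omega>. Z l \<omega> * Z m \<omega>) \<le> E (\<lambda>\<omega>. Z l \<omega> * Zp k m \<omega>) + R * (\<Sum>i\<in>I m. E (mf k i) / real i)"
proof -
  define F where "F \<omega> = (\<Sum>i\<in>I m. mf k i \<omega> / real i)" for \<omega>
  have FH: "F \<in> H" unfolding F_def by (rule H_sum[OF sp fin_I], rule H_div[OF sp mf_H])
  have ZZpH: "(\<lambda>\<omega>. Z l \<omega> * Zp k m \<omega>) \<in> H"
    by (rule H_mult_bdd[OF Z_H Zp_H]) (auto intro: Z_bound[OF l] Zp_bound[OF m])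
  have ZZH: "(\<lambda>\<omega>. Z l \<omega> * Z m \<omega>) \<in> H"
    by (rule H_mult_bdd[OF Z_H Z_H]) (auto intro: Z_bound[OF l] Z_bound[OF m])
  have pw: "Z l \<omega> * Z m \<omega> \<le> Z l \<omega> * Zp k m \<omega> + R * F \<omega>" for \<omega>
  proof -
    have d: "Z m \<omega> - Zp k m \<omega> = (\<Sum>i\<in>I m. (f (Wn E X i \<omega>) - f ((Sn X i \<omega> - Sn X k \<omega>) / Bn E X i)) / real i)"
      unfolding Z_def Zp_def sum_subtractf[symmetric] by (rule sum.cong) (auto simp: diff_divide_distrib)
    have "\<bar>Z m \<omega> - Zp k m \<omega>\<bar> \<le> (\<Sum>i\<in>I m. \<bar>(f (Wn E X i \<omega>) - f ((Sn X i \<omega> - Sn X k \<omega>) / Bn E X i)) / real i\<bar>)"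
      unfolding d by (rule sum_abs)
    also have "\<dots> \<le> F \<omega>" unfolding F_def
    proof (rule sum_mono)
      fix i assume i: "i \<in> I m"
      have ip: "real i > 0" by (rule I_pos[OF m i])
      show "\<bar>(f (Wn E X i \<omega>) - f ((Sn X i \<omega> - Sn X k \<omega>) / Bn E X i)) / real i\<bar> \<le> mf k i \<omega> / real i"
        using mf_pw[OF I_ge1[OF m i], of \<omega> k] ip by (simp add: abs_div divide_right_mono)
    qed
    finally have 1: "\<bar>Z m \<omega> - Zp k m \<omega>\<bar> \<le> F \<omega>" .
    have "Z l \<omega> * (Z m \<omega> - Zp k m \<omega>) \<le> \<bar>Z l \<omega>\<bar> * \<bar>Z m \<omega> - Zp k m \<omega>\<bar>" by (metis abs_ge_self abs_mult)
    also have "\<dots> \<le> R * F \<omega>" using Z_bound[OF l] 1 R_nonneg by (intro mult_mono) auto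
    finally show ?thesis by (simp add: algebra_simps)
  qed
  have "E (\<lambda>\<omega>. Z l \<omega> * Z m \<omega>) \<le> E (\<lambda>\<omega>. Z l \<omega> * Zp k m \<omega> + R * F \<omega>)"
    by (rule E_mono[OF sp ZZH H_add[OF sp ZZpH H_scale[OF sp FH]]]) (rule pw)
  also have "\<dots> \<le> E (\<lambda>\<omega>. Z l \<omega> * Zp k m \<omega>) + E (\<lambda>\<omega>. R * F \<omega>)"
    by (rule E_add[OF sp ZZpH H_scale[OF sp FH]])
  also have "E (\<lambda>\<omega>. R * F \<omega>) = R * E F" by (rule E_hom[OF sp FH R_nonneg])
  also have "E F \<le> (\<Sum>i\<in>I m. E (\<lambda>\<omega>. mf k i \<omega> / real i))" unfolding F_def
    by (rule E_sum_le[OF sp fin_I], rule H_div[OF sp mf_H])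
  also have "\<dots> = (\<Sum>i\<in>I m. E (mf k i) / real i)"
    by (rule sum.cong[OF refl], rule E_div[OF mf_H I_pos[OF m]])
  finally show ?thesis using R_nonneg by (simp add: mult_left_mono)
qed

end


context setting begin

definition A0 :: real where "A0 = Lf * sqrt K2 / sqrt c0"

lemma A0_nonneg: "A0 \<ge> 0" unfolding A0_def using fL(1) K2(1) c0(1) by simp

lemma mf_E_G:
  assumes l: "1 \<le> l" and m: "1 \<le> m" and i: "i \<in> I m"
  shows "E (mf (4^l) i) \<le> A0 * 2^l / 2^(m-1)"
proof -
  have i1: "1 \<le> i" by (rule I_ge1[OF m i])
  have B: "Bn E X i > 0" by (rule Bn_pos[OF i1])
  have p4: "(4::real)^j = (2^j)\<^sup>2" for j
    by (metis power2_eq_square power_mult_distrib mult_2_right numeral_Bit0 one_plus_numeral numeral_One)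
  have s1: "sqrt (K2 * real (4^l)) = sqrt K2 * 2^l"
    by (simp add: p4 real_sqrt_mult)
  have s2: "sqrt c0 * 2^(m-1) \<le> Bn E X i"
  proof -
    have "real (4^(m-1)) \<le> real i" using I_lower[OF i] by (simp only: of_nat_le_iff)
    then have "c0 * real (4^(m-1)) \<le> c0 * real i" using c0(1) by simp
    then have "sqrt (c0 * real (4^(m-1))) \<le> sqrt (c0 * real i)" by simp
    moreover have "sqrt (c0 * real (4^(m-1))) = sqrt c0 * 2^(m-1)" by (simp add: p4 real_sqrt_mult)
    ultimately show ?thesis using c0(2)[OF i1] by linarith
  qed
  have pos: "0 < sqrt c0 * 2^(m-1)" using c0(1) by simp
  have "E (mf (4^l) i) \<le> Lf / Bn E X i * sqrt (K2 * real (4^l))"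
    by (rule mf_E) (use i1 in simp_all)
  also have "\<dots> = Lf / Bn E X i * (sqrt K2 * 2^l)" by (simp only: s1)
  also have "\<dots> \<le> Lf / (sqrt c0 * 2^(m-1)) * (sqrt K2 * 2^l)"
  proof (rule mult_right_mono)
    show "Lf / Bn E X i \<le> Lf / (sqrt c0 * 2 ^ (m - 1))"
      by (rule divide_left_mono[OF s2]) (use fL(1) pos B in auto)
  qed (use K2(1) in simp)
  also have "\<dots> = A0 * 2^l / 2^(m-1)" unfolding A0_def by (simp add: field_simps)
  finally show ?thesis .
qed

lemma pair_bound:
  assumes l: "1 \<le> l" "l < m"
  shows "E (\<lambda>\<omega>. Z l \<omega> * Z m \<omega>) \<le> 9 * R * (A0 * 2^l / 2^(m-1)) + 3 * R * (Ce * (1/q)^(m-1))"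
proof -
  have m: "1 \<le> m" using l by simp
  define G where "G = A0 * 2^l / 2^(m-1)"
  define eps where "eps = Ce * (1/q)^(m-1)"
  have G0: "G \<ge> 0" unfolding G_def using A0_nonneg by simp
  have eps0: "eps \<ge> 0" unfolding eps_def using Ce q by simp
  define k :: nat where "k = 4^l"
  have S1: "(\<Sum>i\<in>I m. E (mf k i) / real i) \<le> 3 * G"
    by (rule sum_I_le[OF m G0]) (use mf_E_G[OF l(1) m] in \<open>simp add: G_def k_def\<close>)
  have S2: "(\<Sum>i\<in>I m. (eps + E (mf k i)) / real i) \<le> 3 * (eps + G)"
    by (rule sum_I_le[OF m]) (use G0 eps0 mf_E_G[OF l(1) m] in \<open>auto simp: G_def k_def\<close>)
  have up: "max (E (Zp k m)) 0 \<le> 3 * G" using Zp_upper[OF m, of k] S1 G0 by simp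
  have lo: "max (E (\<lambda>\<omega>. - Zp k m \<omega>)) 0 \<le> 3 * (eps + G)"
    using Zp_lower[OF m, of k] S2 G0 eps0 unfolding eps_def by simp
  have "E (\<lambda>\<omega>. Z l \<omega> * Z m \<omega>) \<le> E (\<lambda>\<omega>. Z l \<omega> * Zp k m \<omega>) + R * (\<Sum>i\<in>I m. E (mf k i) / real i)"
    by (rule ZZ_le[OF l(1) m])
  also have "\<dots> \<le> R * (max (E (Zp k m)) 0 + max (E (\<lambda>\<omega>. - Zp k m \<omega>)) 0) + R * (3 * G)"
    using ZZp_le[OF l] S1 R_nonneg unfolding k_def by (intro add_mono mult_left_mono) auto
  also have "\<dots> \<le> R * (3 * G + 3 * (eps + G)) + R * (3 * G)"
    using up lo R_nonneg by (intro add_mono mult_left_mono) auto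
  also have "\<dots> = 9 * R * G + 3 * R * eps" by (simp add: algebra_simps)
  finally show ?thesis unfolding G_def eps_def .
qed

lemma geo_sum: "(\<Sum>l\<in>{1..n}. (2::real)^l) \<le> 2 * 2^n"
  by (induction n) (auto simp: sum.cl_ivl_Suc)

lemma lin_geo: "real n * (1/q)^n \<le> 1 / (q - 1)"
proof -
  have "1 + real n * (q - 1) \<le> (1 + (q - 1))^n" by (rule Bernoulli_inequality) (use q in simp)
  then have 1: "real n * (q - 1) \<le> q^n" by simp
  have qn: "q^n > 0" using q by simp
  have "real n * (1/q)^n = real n / q^n" by (simp add: power_one_over)
  also have "\<dots> \<le> 1 / (q - 1)" using 1 qn q by (simp add: field_simps)
  finally show ?thesis .
qed

lemma cross_sum:
  "(\<Sum>l\<in>{1..n}. E (\<lambda>\<omega>. Z l \<omega> * Z (Suc n) \<omega>)) \<le> 18 * R * A0 + 3 * R * Ce / (q - 1)"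
proof -
  have "(\<Sum>l\<in>{1..n}. E (\<lambda>\<omega>. Z l \<omega> * Z (Suc n) \<omega>)) \<le>
      (\<Sum>l\<in>{1..n}. 9 * R * A0 / 2^n * 2^l + 3 * R * Ce * (1/q)^n)"
  proof (rule sum_mono)
    fix l assume "l \<in> {1..n}"
    then have "1 \<le> l" "l < Suc n" by auto
    from pair_bound[OF this] show "E (\<lambda>\<omega>. Z l \<omega> * Z (Suc n) \<omega>) \<le> 9 * R * A0 / 2^n * 2^l + 3 * R * Ce * (1/q)^n"
      by (simp add: field_simps)
  qed
  also have "\<dots> = 9 * R * A0 / 2^n * (\<Sum>l\<in>{1..n}. 2^l) + 3 * R * Ce * (real n * (1/q)^n)"
    by (simp add: sum.distrib sum_distrib_left)
  also have "\<dots> \<le> 9 * R * A0 / 2^n * (2 * 2^n) + 3 * R * Ce * (1 / (q - 1))"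
    using R_nonneg A0_nonneg Ce geo_sum[of n] lin_geo[of n]
    by (intro add_mono mult_left_mono) auto
  also have "\<dots> = 18 * R * A0 + 3 * R * Ce / (q - 1)" by simp
  finally show ?thesis .
qed

lemma main_bound: "\<exists>M6>0. \<forall>n\<ge>1. E (\<lambda>\<omega>. (T n \<omega>)\<^sup>2) \<le> M6 * real n"
proof -
  define Ms where "Ms = R\<^sup>2 + 2 * (18 * R * A0 + 3 * R * Ce / (q - 1))"
  have Ms0: "Ms \<ge> 0" unfolding Ms_def using R_nonneg A0_nonneg Ce q by simp
  have TH2: "(\<lambda>\<omega>. (T n \<omega>)\<^sup>2) \<in> H" for n
    using H_mult_bdd[OF T_H[of n] T_H[of n], of "real n * R"] T_bound by (simp add: power2_eq_square)
  have ind: "E (\<lambda>\<omega>. (T n \<omega>)\<^sup>2) \<le> Ms * real n" for n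
  proof (induction n)
    case 0 then show ?case by (simp add: T_def E_const[OF sp])
  next
    case (Suc n)
    define Y where "Y = Z (Suc n)"
    have YH: "Y \<in> H" unfolding Y_def by (rule Z_H)
    have Yb: "\<bar>Y \<omega>\<bar> \<le> R" for \<omega> unfolding Y_def by (rule Z_bound) simp
    have Y2H: "(\<lambda>\<omega>. (Y \<omega>)\<^sup>2) \<in> H" using H_mult_bdd[OF YH YH Yb Yb] by (simp add: power2_eq_square)
    have ZYH: "(\<lambda>\<omega>. Z l \<omega> * Y \<omega>) \<in> H" if "l \<in> {1..n}" for l
      using that by (intro H_mult_bdd[OF Z_H YH _ Yb]) (auto intro: Z_bound)
    have ZY2H: "(\<lambda>\<omega>. 2 * (Z l \<omega> * Y \<omega>)) \<in> H" if "l \<in> {1..n}" for l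
      by (rule H_scale[OF sp ZYH[OF that]])
    have SH: "(\<lambda>\<omega>. \<Sum>l\<in>{1..n}. 2 * (Z l \<omega> * Y \<omega>)) \<in> H" by (rule H_sum[OF sp]) (auto intro: ZY2H)
    have eq: "(T (Suc n) \<omega>)\<^sup>2 = (T n \<omega>)\<^sup>2 + ((Y \<omega>)\<^sup>2 + (\<Sum>l\<in>{1..n}. 2 * (Z l \<omega> * Y \<omega>)))" for \<omega>
    proof -
      have "T (Suc n) \<omega> = T n \<omega> + Y \<omega>" unfolding T_def Y_def by simp
      moreover have "(\<Sum>l\<in>{1..n}. 2 * (Z l \<omega> * Y \<omega>)) = 2 * T n \<omega> * Y \<omega>"
        unfolding T_def by (simp add: sum_distrib_left sum_distrib_right algebra_simps)
      ultimately show ?thesis by (simp add: power2_eq_square algebra_simps)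
    qed
    have "E (\<lambda>\<omega>. (T (Suc n) \<omega>)\<^sup>2) = E (\<lambda>\<omega>. (T n \<omega>)\<^sup>2 + ((Y \<omega>)\<^sup>2 + (\<Sum>l\<in>{1..n}. 2 * (Z l \<omega> * Y \<omega>))))"
      by (simp only: eq)
    also have "\<dots> \<le> E (\<lambda>\<omega>. (T n \<omega>)\<^sup>2) + E (\<lambda>\<omega>. (Y \<omega>)\<^sup>2 + (\<Sum>l\<in>{1..n}. 2 * (Z l \<omega> * Y \<omega>)))"
      by (rule E_add[OF sp TH2 H_add[OF sp Y2H SH]])
    also have "E (\<lambda>\<omega>. (Y \<omega>)\<^sup>2 + (\<Sum>l\<in>{1..n}. 2 * (Z l \<omega> * Y \<omega>))) \<le>
        E (\<lambda>\<omega>. (Y \<omega>)\<^sup>2) + E (\<lambda>\<omega>. \<Sum>l\<in>{1..n}. 2 * (Z l \<omega> * Y \<omega>))"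
      by (rule E_add[OF sp Y2H SH])
    also have "E (\<lambda>\<omega>. (Y \<omega>)\<^sup>2) \<le> R\<^sup>2"
    proof (rule E_mono_c[OF sp Y2H])
      fix \<omega> show "(Y \<omega>)\<^sup>2 \<le> R\<^sup>2" using Yb[of \<omega>] by (metis abs_le_square_iff abs_of_nonneg R_nonneg)
    qed
    also have "E (\<lambda>\<omega>. \<Sum>l\<in>{1..n}. 2 * (Z l \<omega> * Y \<omega>)) \<le> (\<Sum>l\<in>{1..n}. E (\<lambda>\<omega>. 2 * (Z l \<omega> * Y \<omega>)))"
      by (rule E_sum_le[OF sp]) (auto intro: ZY2H)
    also have "\<dots> = 2 * (\<Sum>l\<in>{1..n}. E (\<lambda>\<omega>. Z l \<omega> * Y \<omega>))"
      by (simp add: sum_distrib_left E_hom[OF sp ZYH])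
    also have "\<dots> \<le> 2 * (18 * R * A0 + 3 * R * Ce / (q - 1))"
      using cross_sum[of n] unfolding Y_def by simp
    finally have "E (\<lambda>\<omega>. (T (Suc n) \<omega>)\<^sup>2) \<le> E (\<lambda>\<omega>. (T n \<omega>)\<^sup>2) + Ms"
      unfolding Ms_def by simp
    then show ?case using Suc.IH by (simp add: algebra_simps)
  qed
  show ?thesis
  proof (intro exI[of _ "Ms + 1"] conjI allI impI)
    show "Ms + 1 > 0" using Ms0 by simp
    fix n :: nat assume "1 \<le> n"
    have "Ms * real n \<le> (Ms + 1) * real n" by (simp add: algebra_simps)
    then show "E (\<lambda>\<omega>. (T n \<omega>)\<^sup>2) \<le> (Ms + 1) * real n" using ind[of n] by linarith
  qed
qed

end


lemma E_div_gen:
  assumes sp: "sublinear_space M H E" and "U \<in> H" "r > 0"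
  shows "E (\<lambda>\<omega>. U \<omega> / r) = E U / r"
proof -
  have "E (\<lambda>\<omega>. U \<omega> / r) = E (\<lambda>\<omega>. (1 / r) * U \<omega>)" by simp
  also have "\<dots> = (1 / r) * E U" by (rule E_hom[OF sp assms(2)]) (use assms(3) in simp)
  finally show ?thesis by simp
qed

lemma pow2_powr: "((2::real)^n) powr a = (2 powr a)^n"
proof -
  have "(2::real)^n = 2 powr (real n)" by (simp add: powr_realpow)
  then have "((2::real)^n) powr a = 2 powr (real n * a)" by (simp add: powr_powr)
  also have "\<dots> = (2 powr a)^n" by (simp add: powr_power)
  finally show ?thesis .
qed

theorem lemma4p5:
  fixes M :: "'a measure" and H :: "('a \<Rightarrow> real) set" and E :: "('a \<Rightarrow> real) \<Rightarrow> real"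
    and Mt :: "'b measure" and Ht :: "('b \<Rightarrow> real) set" and Et :: "('b \<Rightarrow> real) \<Rightarrow> real"
    and X :: "nat \<Rightarrow> 'a \<Rightarrow> real" and \<xi> :: "'b \<Rightarrow> real"
    and \<beta> \<alpha> :: real and f :: "real \<Rightarrow> real"
  assumes space: "sublinear_space M H E" and condA: "condA H E"
    and tspace: "sublinear_space Mt Ht Et" and tcondA: "condA Ht Et"
    and beta: "\<beta> \<ge> 1"
    and alpha: "0 < \<alpha>" "\<alpha> < 1"
    and seq: "standing_seq H E \<beta> \<alpha> X"
    and xi: "\<xi> \<in> Ht" "(\<lambda>\<omega>. (\<xi> \<omega>)\<^sup>2) \<in> Ht" "G_normal Et \<xi>"
    and xi_up: "sqrt (Et (\<lambda>\<omega>. (\<xi> \<omega>)\<^sup>2)) = 2 * \<beta> / (1 + \<beta>)"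
    and xi_lo: "sqrt (- Et (\<lambda>\<omega>. - (\<xi> \<omega>)\<^sup>2)) = 2 / (1 + \<beta>)"
    and song: "song_bound H E Et \<xi> \<beta> \<alpha>"
    and moment: "\<exists>K. \<forall>i\<ge>1. E (\<lambda>\<omega>. \<bar>X i \<omega>\<bar> powr (2 + \<alpha>)) \<le> K"
    and fH: "bLip1 f" "Et (\<lambda>\<omega>. f (\<xi> \<omega>)) = - Et (\<lambda>\<omega>. - f (\<xi> \<omega>))"
  shows "\<exists>M6>0. \<forall>n\<ge>1.
     E (\<lambda>\<omega>. (\<Sum>l=1..n. \<Sum>i\<in>{4^(l-1)..<4^l}.
            (f (Wn E X i \<omega>) - E (\<lambda>\<omega>'. f (Wn E X i \<omega>'))) / real i)\<^sup>2) \<le> M6 * real n"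
proof -
  have ind: "indep_seq E X" using seq unfolding standing_seq_def by blast
  have XH: "\<And>i. 1 \<le> i \<Longrightarrow> X i \<in> H" using seq unfolding standing_seq_def by blast
  have X2H: "\<And>i. 1 \<le> i \<Longrightarrow> (\<lambda>\<omega>. (X i \<omega>)\<^sup>2) \<in> H" using seq unfolding standing_seq_def by blast
  have mean1: "\<And>i. 1 \<le> i \<Longrightarrow> E (X i) = 0" using seq unfolding standing_seq_def by blast
  have mean2: "\<And>i. 1 \<le> i \<Longrightarrow> E (\<lambda>\<omega>. - X i \<omega>) = 0" using seq unfolding standing_seq_def by blast
  have ratio: "\<And>i. 1 \<le> i \<Longrightarrow> sig_up E X i / sig_lo E X i = \<beta>" using seq unfolding standing_seq_def by blast
  obtain c where c: "c > 0" "\<And>i. 1 \<le> i \<Longrightarrow> c \<le> (sig_lo E X i)\<^sup>2" using seq unfolding standing_seq_def by blast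
  obtain K where K: "\<And>i. 1 \<le> i \<Longrightarrow> (sig_up E X i)\<^sup>2 \<le> K" using seq unfolding standing_seq_def by blast
  obtain Km where Km: "\<And>i. 1 \<le> i \<Longrightarrow> E (\<lambda>\<omega>. \<bar>X i \<omega>\<bar> powr (2 + \<alpha>)) \<le> Km" using moment by blast
  obtain Bf L0 where fBL: "Bf \<ge> 0" "L0 \<ge> 0" "\<And>x. \<bar>f x\<bar> \<le> Bf" "\<And>x y. \<bar>f x - f y\<bar> \<le> L0 * \<bar>x - y\<bar>"
    using bLip1E[OF fH(1)] by metis
  define Lf where "Lf = L0 + 1"
  have Lf: "Lf > 0" "\<And>x y. \<bar>f x - f y\<bar> \<le> Lf * \<bar>x - y\<bar>"
  proof -
    show "Lf > 0" using fBL(2) by (simp add: Lf_def)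
    fix x y
    have "L0 * \<bar>x - y\<bar> \<le> Lf * \<bar>x - y\<bar>" unfolding Lf_def by (intro mult_right_mono) auto
    then show "\<bar>f x - f y\<bar> \<le> Lf * \<bar>x - y\<bar>" using fBL(4)[of x y] by linarith
  qed
  obtain Cs where Cs: "Cs > 0" "\<And>n g. 1 \<le> n \<Longrightarrow> bLip1_le1 g \<Longrightarrow>
        \<bar>E (\<lambda>\<omega>. g (Wn E X n \<omega>)) - Et (\<lambda>\<omega>. g (\<xi> \<omega>))\<bar> \<le>
        Cs * (MAX i\<in>{1..n}. E (\<lambda>\<omega>. \<bar>X i \<omega>\<bar> powr (2 + \<alpha>)) / (sig E X i) powr (2 + \<alpha>)
                              * (sig E X i / Bn E X n) powr \<alpha>)"
    using song seq unfolding song_bound_def by blast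
  define K2 where "K2 = max K 1"
  have EX2: "E (\<lambda>\<omega>. (X i \<omega>)\<^sup>2) \<le> K2" and sigup: "sig_up E X i \<le> sqrt K2" if i: "1 \<le> i" for i
  proof -
    have nn: "E (\<lambda>\<omega>. (X i \<omega>)\<^sup>2) \<ge> 0" by (rule E_mono_c2[OF space X2H[OF i]]) simp
    have "(sig_up E X i)\<^sup>2 = E (\<lambda>\<omega>. (X i \<omega>)\<^sup>2)" unfolding sig_up_def using nn by simp
    then show "E (\<lambda>\<omega>. (X i \<omega>)\<^sup>2) \<le> K2" using K[OF i] unfolding K2_def by linarith
    then show "sig_up E X i \<le> sqrt K2" unfolding sig_up_def by simp
  qed
  have siglo: "sqrt c \<le> sig_lo E X i" if i: "1 \<le> i" for i
  proof -
    have "E (\<lambda>\<omega>. - (X i \<omega>)\<^sup>2) \<le> 0"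
      by (rule E_mono_c[OF space H_minus[OF space X2H[OF i]]]) simp
    then have nn: "sig_lo E X i \<ge> 0" unfolding sig_lo_def by simp
    have "sqrt c \<le> sqrt ((sig_lo E X i)\<^sup>2)" by (rule real_sqrt_le_mono[OF c(2)[OF i]])
    then show ?thesis using nn by simp
  qed
  have sig_lo_up: "sig_lo E X i \<le> sig_up E X i" if i: "1 \<le> i" for i
  proof -
    have pos: "sig_lo E X i > 0" using siglo[OF i] c(1) by (smt (verit) real_sqrt_gt_zero)
    then have "sig_up E X i = \<beta> * sig_lo E X i" using ratio[OF i] by (simp add: field_simps)
    then show ?thesis using beta pos by (simp add: mult_le_cancel_right1)
  qed
  have sig_lb: "sqrt c \<le> sig E X i" and sig_ub: "sig E X i \<le> sqrt K2" if i: "1 \<le> i" for i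
  proof -
    show "sqrt c \<le> sig E X i" using siglo[OF i] sig_lo_up[OF i] unfolding sig_def by (simp add: field_simps)
    show "sig E X i \<le> sqrt K2" using sig_lo_up[OF i] sigup[OF i] unfolding sig_def by (simp add: field_simps)
  qed
  have Bn_lb: "sqrt (c * real i) \<le> Bn E X i" if i: "1 \<le> i" for i
  proof -
    have "(\<Sum>j=1..i. c) \<le> (\<Sum>j=1..i. (sig E X j)\<^sup>2)"
    proof (rule sum_mono)
      fix j assume "j \<in> {1..i}"
      then have "sqrt c \<le> sig E X j" using sig_lb by simp
      then have "(sqrt c)\<^sup>2 \<le> (sig E X j)\<^sup>2" using c(1) by (intro power_mono) auto
      then show "c \<le> (sig E X j)\<^sup>2" using c(1) by simp
    qed
    then show ?thesis unfolding Bn_def by (simp add: mult.commute)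
  qed
  define q where "q = (2::real) powr \<alpha>"
  have q: "q > 1" unfolding q_def using powr_less_mono[of 0 \<alpha> 2] alpha(1) by simp
  define s0 where "s0 = sqrt c"
  define s1 where "s1 = sqrt K2"
  have s0: "s0 > 0" unfolding s0_def using c(1) by simp
  have s1: "s1 \<ge> 0" unfolding s1_def K2_def by simp
  define Km' where "Km' = max Km 0"
  define D1 where "D1 = Km' / s0 powr (2 + \<alpha>) * (s1 / s0) powr \<alpha>"
  define Ce where "Ce = 2 * Lf * Cs * D1"
  have D1: "D1 \<ge> 0" unfolding D1_def Km'_def by simp
  have Ce: "Ce \<ge> 0" unfolding Ce_def using Lf(1) Cs(1) D1 by simp
  have songb: "E (\<lambda>\<omega>. f (Wn E X i \<omega>)) + E (\<lambda>\<omega>. - f (Wn E X i \<omega>)) \<le> Ce * (1/q)^(m-1)"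
    if m: "1 \<le> m" and i: "i \<in> {4^(m-1)..<4^m}" for m i
  proof -
    have i1: "1 \<le> i" using i by (auto intro: order_trans[rotated])
    have Bi: "s0 * 2^(m-1) \<le> Bn E X i"
    proof -
      have p4: "(4::real)^j = (2^j)\<^sup>2" for j
        by (metis power2_eq_square power_mult_distrib mult_2_right numeral_Bit0 one_plus_numeral numeral_One)
      have "real (4^(m-1)) \<le> real i" using i by (simp only: of_nat_le_iff) simp
      then have "c * real (4^(m-1)) \<le> c * real i" using c(1) by simp
      then have "sqrt (c * real (4^(m-1))) \<le> sqrt (c * real i)" by simp
      moreover have "sqrt (c * real (4^(m-1))) = s0 * 2^(m-1)" unfolding s0_def by (simp add: p4 real_sqrt_mult)
      ultimately show ?thesis using Bn_lb[OF i1] by linarith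
    qed
    have Bpos: "0 < s0 * 2^(m-1)" using s0 by simp
    have MAXb: "(MAX j\<in>{1..i}. E (\<lambda>\<omega>. \<bar>X j \<omega>\<bar> powr (2 + \<alpha>)) / (sig E X j) powr (2 + \<alpha>)
                              * (sig E X j / Bn E X i) powr \<alpha>) \<le> D1 * (1/q)^(m-1)"
    proof (rule Max.boundedI, simp, use i1 in simp)
      fix t assume "t \<in> (\<lambda>j. E (\<lambda>\<omega>. \<bar>X j \<omega>\<bar> powr (2 + \<alpha>)) / (sig E X j) powr (2 + \<alpha>)
                              * (sig E X j / Bn E X i) powr \<alpha>) ` {1..i}"
      then obtain j where j: "j \<in> {1..i}" and t: "t = E (\<lambda>\<omega>. \<bar>X j \<omega>\<bar> powr (2 + \<alpha>)) / (sig E X j) powr (2 + \<alpha>)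
                              * (sig E X j / Bn E X i) powr \<alpha>" by blast
      have j1: "1 \<le> j" using j by simp
      define sj where "sj = sig E X j"
      have sj: "s0 \<le> sj" "sj \<le> s1" unfolding sj_def s0_def s1_def using sig_lb[OF j1] sig_ub[OF j1] by auto
      have sjp: "sj > 0" using sj s0 by simp
      have "t \<le> Km' / sj powr (2 + \<alpha>) * (sj / Bn E X i) powr \<alpha>"
        unfolding t sj_def[symmetric]
      proof (rule mult_right_mono)
        show "E (\<lambda>\<omega>. \<bar>X j \<omega>\<bar> powr (2 + \<alpha>)) / sj powr (2 + \<alpha>) \<le> Km' / sj powr (2 + \<alpha>)"
          using Km[OF j1] unfolding Km'_def by (intro divide_right_mono) auto
      qed simp
      also have "\<dots> \<le> Km' / s0 powr (2 + \<alpha>) * ((s1 / s0) * (1/2)^(m-1)) powr \<alpha>"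
      proof (rule mult_mono)
        show "Km' / sj powr (2 + \<alpha>) \<le> Km' / s0 powr (2 + \<alpha>)"
          by (rule divide_left_mono) (use sj s0 alpha in \<open>auto simp: Km'_def intro: powr_mono2\<close>)
        have "sj / Bn E X i \<le> s1 / (s0 * 2^(m-1))" by (rule frac_le) (use s1 sj Bpos Bi in auto)
        also have "\<dots> = (s1 / s0) * (1/2)^(m-1)" by (simp add: power_one_over)
        finally have "sj / Bn E X i \<le> (s1 / s0) * (1/2)^(m-1)" .
        moreover have "0 \<le> sj / Bn E X i" using sjp Bpos Bi by simp
        ultimately show "(sj / Bn E X i) powr \<alpha> \<le> ((s1 / s0) * (1/2)^(m-1)) powr \<alpha>"
          using alpha by (intro powr_mono2) auto
      qed (auto simp: Km'_def)
      also have "\<dots> = D1 * (1/q)^(m-1)"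
      proof -
        have h: "(((1::real)/2)^(m-1)) powr \<alpha> = (1/q)^(m-1)"
          by (simp add: power_one_over powr_divide pow2_powr q_def)
        have e1: "((s1 / s0) * (1/2)^(m-1)) powr \<alpha> = (s1/s0) powr \<alpha> * (((1::real)/2)^(m-1)) powr \<alpha>"
          by (rule powr_mult)
        show ?thesis unfolding D1_def e1 h by (simp only: mult.assoc)
      qed
      finally show "t \<le> D1 * (1/q)^(m-1)" .
    qed
    have fxiH: "(\<lambda>\<omega>. f (\<xi> \<omega>)) \<in> Ht" by (rule H_comp[OF tspace fH(1) xi(1)])
    have fWH: "(\<lambda>\<omega>. f (Wn E X i \<omega>)) \<in> H"
    proof -
      have "Sn X i \<in> H" unfolding Sn_def by (rule H_sum[OF space]) (auto intro: XH)
      then have "Wn E X i \<in> H" unfolding Wn_def using H_div[OF space] by simp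
      then show ?thesis by (rule H_comp[OF space fH(1)])
    qed
    have g1: "bLip1_le1 (\<lambda>x. f x / Lf)" unfolding bLip1_le1_def
    proof (rule exI[of _ "Bf / Lf"], intro allI conjI)
      fix x y
      show "\<bar>f x / Lf\<bar> \<le> Bf / Lf" using fBL(3)[of x] Lf(1) by (simp add: abs_div divide_right_mono)
      have "\<bar>f x - f y\<bar> / Lf \<le> \<bar>x - y\<bar>" using Lf by (simp add: field_simps mult.commute)
      then show "\<bar>f x / Lf - f y / Lf\<bar> \<le> \<bar>x - y\<bar>" using Lf(1) by (simp add: diff_divide_distrib[symmetric] abs_div)
    qed
    have g2: "bLip1_le1 (\<lambda>x. - f x / Lf)" unfolding bLip1_le1_def
    proof (rule exI[of _ "Bf / Lf"], intro allI conjI)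
      fix x y
      show "\<bar>- f x / Lf\<bar> \<le> Bf / Lf" using fBL(3)[of x] Lf(1) by (simp add: abs_div divide_right_mono)
      have "\<bar>f x - f y\<bar> / Lf \<le> \<bar>x - y\<bar>" using Lf by (simp add: field_simps mult.commute)
      then show "\<bar>- f x / Lf - - f y / Lf\<bar> \<le> \<bar>x - y\<bar>" using Lf(1)
        by (simp add: diff_divide_distrib[symmetric] abs_div abs_minus_commute)
    qed
    define MX where "MX = (MAX j\<in>{1..i}. E (\<lambda>\<omega>. \<bar>X j \<omega>\<bar> powr (2 + \<alpha>)) / (sig E X j) powr (2 + \<alpha>)
                              * (sig E X j / Bn E X i) powr \<alpha>)"
    have b1: "\<bar>E (\<lambda>\<omega>. f (Wn E X i \<omega>)) / Lf - Et (\<lambda>\<omega>. f (\<xi> \<omega>)) / Lf\<bar> \<le> Cs * MX"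
      using Cs(2)[OF i1 g1] E_div_gen[OF space fWH Lf(1)] E_div_gen[OF tspace fxiH Lf(1)]
      unfolding MX_def by simp
    have b2: "\<bar>E (\<lambda>\<omega>. - f (Wn E X i \<omega>)) / Lf - Et (\<lambda>\<omega>. - f (\<xi> \<omega>)) / Lf\<bar> \<le> Cs * MX"
      using Cs(2)[OF i1 g2] E_div_gen[OF space H_minus[OF space fWH] Lf(1)]
        E_div_gen[OF tspace H_minus[OF tspace fxiH] Lf(1)]
      unfolding MX_def by simp
    define A1 where "A1 = E (\<lambda>\<omega>. f (Wn E X i \<omega>))"
    define A2 where "A2 = E (\<lambda>\<omega>. - f (Wn E X i \<omega>))"
    define P1 where "P1 = Et (\<lambda>\<omega>. f (\<xi> \<omega>))"
    define P2 where "P2 = Et (\<lambda>\<omega>. - f (\<xi> \<omega>))"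
    have c1: "A1 / Lf - P1 / Lf \<le> Cs * MX" using b1 unfolding A1_def P1_def by (metis abs_le_iff)
    have c2: "A2 / Lf - P2 / Lf \<le> Cs * MX" using b2 unfolding A2_def P2_def by (metis abs_le_iff)
    have P12: "P1 / Lf + P2 / Lf = 0" using fH(2) unfolding P1_def P2_def by (simp add: add_divide_distrib[symmetric])
    have "(A1 + A2) / Lf = (A1 / Lf - P1 / Lf) + (A2 / Lf - P2 / Lf) + (P1 / Lf + P2 / Lf)"
      by (simp add: add_divide_distrib)
    then have "(A1 + A2) / Lf \<le> 2 * Cs * MX" using c1 c2 P12 by linarith
    then have "(E (\<lambda>\<omega>. f (Wn E X i \<omega>)) + E (\<lambda>\<omega>. - f (Wn E X i \<omega>))) / Lf \<le> 2 * Cs * MX"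
      unfolding A1_def A2_def .
    then have "E (\<lambda>\<omega>. f (Wn E X i \<omega>)) + E (\<lambda>\<omega>. - f (Wn E X i \<omega>)) \<le> Lf * (2 * Cs * MX)"
      using Lf(1) by (simp add: field_simps)
    also have "\<dots> \<le> Lf * (2 * Cs * (D1 * (1/q)^(m-1)))"
      using MAXb Lf(1) Cs(1) unfolding MX_def by (intro mult_left_mono) auto
    also have "\<dots> = Ce * (1/q)^(m-1)" unfolding Ce_def by simp
    finally show ?thesis .
  qed
  interpret S: setting M H E X f Bf Lf K2 c Ce q
  proof
    show "sublinear_space M H E" by (rule space)
    show "indep_seq E X" by (rule ind)
  qed (use XH X2H mean1 mean2 EX2 c(1) Bn_lb fBL(1,3) Lf Ce q songb in \<open>auto simp: K2_def\<close>)
  show ?thesis using S.main_bound unfolding S.T_def S.Z_def S.I_def S.a_def by simp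
qed



end
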